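(* Let $W=\{1,\dots,m\}$, $f(x,i)=f_i(x)$, and let $x_*\in\operatorname{int}A$ be a locally optimal solution of problem $(\mathcal{P})$ at which Robinson's constraint qualification holds, and suppose $\Lambda(x_* )=\{\lambda_*\}$ for some $\lambda_*\in K^*$. Then for every $h\in C(x_* )$, $$\sup_{\alpha\in\alpha(x_*,\lambda_* )}\langle h,\nabla^2_{xx}\mathcal{L}(x_*,\lambda_*,\alpha)h\rangle-\sigma\big(\lambda_*,T^2_K(G(x_* ),DG(x_* )h)\big)\ge0.$$
   Context: Setting: $A\subseteq\mathbb{R}^d$ nonempty closed convex; $Y$ real Banach space with dual $Y^*$ and pairing $\langle\cdot,\cdot\rangle$; $K\subset Y$ nonempty closed convex cone; $f:\mathbb{R}^d\times W\to\mathbb{R}$ with $f(\cdot,i)=f_i$ differentiable and $G:\mathbb{R}^d\to Y$ continuously Fréchet differentiable; in addition $G$ is twice continuously Fréchet differentiable near $x_*$ and each $f_i$ twice continuously differentiable near $x_*$. $F(x)=\max_if_i(x)$, $W(x)=\{i:f_i(x)=F(x)\}$; $(\mathcal{P})$: minimise $F$ s.t. $G(x)\in K$, $x\in A$. Contingent cone $T_C(y)$: $h$ with $\alpha_n\downarrow0$, $h_n\to h$, $y+\alpha_nh_n\in C$. Robinson's constraint qualification: $0\in\operatorname{int}\{G(x_* )+DG(x_* )(A-x_* )-K\}$. $K^*=\{y^*:\langle y^*,y\rangle\le0\ \forall y\in K\}$. $\Lambda(x_* )$: set of $\lambda\in K^*$ with $\langle\lambda,G(x_* )\rangle=0$ and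 $[F+\langle\lambda,G\rangle]'(x_*,h)\ge0$ for all $h\in T_A(x_* )$. $\alpha(x_*,\lambda)$: set of $\alpha\in\mathbb{R}^m$, $\alpha^{(i)}\ge0$, $\alpha^{(i)}=0$ for $i\notin W(x_* )$, $\sum_i\alpha^{(i)}=1$, with $\langle\sum_i\alpha^{(i)}\nabla f_i(x_* ),h\rangle+\langle\lambda,DG(x_* )h\rangle\ge0$ for all $h\in T_A(x_* )$. $\langle h,\nabla^2_{xx}\mathcal{L}(x,\lambda,\alpha)h\rangle=\sum_i\alpha^{(i)}\langle h,\nabla^2f_i(x)h\rangle+\langle\lambda,D^2G(x)(h,h)\rangle$. Critical cone $C(x_* )=\{h\in T_A(x_* ):DG(x_* )h\in T_K(G(x_* )),\ \max_{i\in W(x_* )}\langle\nabla f_i(x_* ),h\rangle\le0\}$. $T^2_S(y,h)$: set of $w$ with $t_n>0$, $t_n\to0$, $\operatorname{dist}(y+t_nh+\frac12t_n^2w,S)=o(t_n^2)$. $\sigma(\lambda,S)=\sup_{y\in S}\langle\lambda,y\rangle$. *)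

theory Defs
  imports "HOL-Analysis.Analysis"
begin

definition contingent_cone :: "'a::real_normed_vector set \<Rightarrow> 'a \<Rightarrow> 'a set" where
  "contingent_cone C y = {h. \<exists>(\<alpha>::nat \<Rightarrow> real) hs.
      (\<forall>n. \<alpha> n > 0) \<and> decseq \<alpha> \<and> \<alpha> \<longlonglongrightarrow> 0 \<and> hs \<longlonglongrightarrow> h \<and>
      (\<forall>n. y + \<alpha> n *\<^sub>R hs n \<in> C)}"

definition second_order_tangent_set :: "'a::real_normed_vector set \<Rightarrow> 'a \<Rightarrow> 'a \<Rightarrow> 'a set" where
  "second_order_tangent_set S y h = {w. \<exists>t::nat \<Rightarrow> real.
      (\<forall>n. t n > 0) \<and> t \<longlonglongrightarrow> 0 \<and>
      (\<lambda>n. infdist (y + t n *\<^sub>R h + ((t n)\<^sup>2 / 2) *\<^sub>R w) S / (t n)\<^sup>2) \<longlonglongrightarrow> 0}"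

definition polar_cone :: "'b::real_normed_vector set \<Rightarrow> ('b \<Rightarrow>\<^sub>L real) set" where
  "polar_cone K = {l. \<forall>y\<in>K. blinfun_apply l y \<le> 0}"

text \<open>Support function sigma(l,S) = sup_{y in S} <l,y>, extended-real valued
  (-infinity for empty S, possibly +infinity).\<close>
definition support_fun :: "('b::real_normed_vector \<Rightarrow>\<^sub>L real) \<Rightarrow> 'b set \<Rightarrow> ereal" where
  "support_fun l S = (SUP y\<in>S. ereal (blinfun_apply l y))"

definition dir_deriv :: "('a::real_normed_vector \<Rightarrow> real) \<Rightarrow> 'a \<Rightarrow> 'a \<Rightarrow> real" where
  "dir_deriv \<phi> x h = Lim (at_right (0::real)) (\<lambda>t. (\<phi> (x + t *\<^sub>R h) - \<phi> x) / t)"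

definition maxfun :: "('a \<Rightarrow> nat \<Rightarrow> real) \<Rightarrow> nat \<Rightarrow> 'a \<Rightarrow> real" where
  "maxfun f m x = Max ((\<lambda>i. f x i) ` {1..m})"

definition active_set :: "('a \<Rightarrow> nat \<Rightarrow> real) \<Rightarrow> nat \<Rightarrow> 'a \<Rightarrow> nat set" where
  "active_set f m x = {i\<in>{1..m}. f x i = maxfun f m x}"

end

theory Submission
  imports Defs "HOL-Analysis.Analysis"
begin

definition hb_good :: "('b::real_vector \<Rightarrow> real) \<Rightarrow> ('b \<times> real) set \<Rightarrow> bool" where
  "hb_good p H \<longleftrightarrow> (0,0) \<in> H \<and> (\<forall>x a y b. (x,a)\<in>H \<longrightarrow> (y,b)\<in>H \<longrightarrow> (x+y,a+b)\<in>H)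
     \<and> (\<forall>x a c. (x,a)\<in>H \<longrightarrow> (c *\<^sub>R x, c*a)\<in>H) \<and> (\<forall>x a. (x,a)\<in>H \<longrightarrow> a \<le> p x)"


lemma hb_zero: "hb_good p H \<Longrightarrow> (0,0) \<in> H" unfolding hb_good_def by (elim conjE)
lemma hb_add: assumes "hb_good p H" "(x,a)\<in>H" "(y,b)\<in>H" shows "(x+y,a+b)\<in>H"
proof -
  have H: "\<forall>x a y b. (x,a)\<in>H \<longrightarrow> (y,b)\<in>H \<longrightarrow> (x+y,a+b)\<in>H" using assms(1) unfolding hb_good_def by (elim conjE)
  show ?thesis using H[rule_format, OF assms(2,3)] .
qed
lemma hb_scale: "hb_good p H \<Longrightarrow> (x,a)\<in>H \<Longrightarrow> (c *\<^sub>R x, c*a)\<in>H"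
  unfolding hb_good_def by (elim conjE) (drule spec[where x=x], drule spec[where x=a], drule spec[where x=c], erule mp, assumption)
lemma hb_le: "hb_good p H \<Longrightarrow> (x,a)\<in>H \<Longrightarrow> a \<le> p x"
  unfolding hb_good_def by (elim conjE) (drule spec[where x=x], drule spec[where x=a], erule mp, assumption)
lemma hb_goodI: "(0,0) \<in> H \<Longrightarrow> (\<And>x a y b. (x,a)\<in>H \<Longrightarrow> (y,b)\<in>H \<Longrightarrow> (x+y,a+b)\<in>H)
  \<Longrightarrow> (\<And>x a c. (x,a)\<in>H \<Longrightarrow> (c *\<^sub>R x, c*a)\<in>H) \<Longrightarrow> (\<And>x a. (x,a)\<in>H \<Longrightarrow> a \<le> p x) \<Longrightarrow> hb_good p H"
  unfolding hb_good_def by blast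

lemma hb_good_fun:
  assumes g: "hb_good p H" and p0: "p 0 = 0" and xa: "(x,a) \<in> H" and xb: "(x,b) \<in> H"
  shows "a = b"
proof -
  have "((-1) *\<^sub>R x, (-1)*b) \<in> H" by (rule hb_scale[OF g xb])
  hence "(x + (-1) *\<^sub>R x, a + (-1)*b) \<in> H" by (rule hb_add[OF g xa])
  hence "(0, a - b) \<in> H" by simp
  hence 1: "a - b \<le> 0" using hb_le[OF g] p0 by fastforce
  have "((-1) *\<^sub>R x, (-1)*a) \<in> H" by (rule hb_scale[OF g xa])
  hence "(x + (-1) *\<^sub>R x, b + (-1)*a) \<in> H" by (rule hb_add[OF g xb])
  hence "(0, b - a) \<in> H" by simp
  hence "b - a \<le> 0" using hb_le[OF g] p0 by fastforce
  with 1 show ?thesis by simp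
qed

lemma hahn_banach_sublinear:
  fixes p :: "'b::real_vector \<Rightarrow> real"
  assumes sub: "\<And>x y. p (x + y) \<le> p x + p y"
    and hom: "\<And>c x. c > 0 \<Longrightarrow> p (c *\<^sub>R x) = c * p x"
  shows "\<exists>\<mu>. linear \<mu> \<and> (\<forall>x. \<mu> x \<le> p x)"
proof -
  have p0: "p 0 = 0" using hom[of 2 0] by simp
  let ?A = "{H. hb_good p H}"
  have "\<exists>M\<in>?A. \<forall>X\<in>?A. M \<subseteq> X \<longrightarrow> X = M"
  proof (rule Zorn_Lemma2, intro ballI)
    fix C assume C: "C \<in> chains ?A"
    show "\<exists>U\<in>?A. \<forall>X\<in>C. X \<subseteq> U"
    proof (cases "C = {}")
      case True
      have "hb_good p {(0,0)}" using p0 by (intro hb_goodI) auto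
      thus ?thesis using True by blast
    next
      case False
      have chain: "\<And>X Y. X \<in> C \<Longrightarrow> Y \<in> C \<Longrightarrow> X \<subseteq> Y \<or> Y \<subseteq> X"
        using C unfolding chains_def chain_subset_def by blast
      have good: "\<And>X. X \<in> C \<Longrightarrow> hb_good p X" using C unfolding chains_def by blast
      have "hb_good p (\<Union>C)"
      proof (rule hb_goodI)
        obtain X where "X \<in> C" using False by blast
        thus "(0,0) \<in> \<Union>C" using hb_zero[OF good[of X]] by blast
      next
        fix x a y b assume "(x,a) \<in> \<Union>C" "(y,b) \<in> \<Union>C"
        then obtain X Y where X: "X \<in> C" "(x,a) \<in> X" and Y: "Y \<in> C" "(y,b)\<in>Y" by blast
        show "(x+y,a+b) \<in> \<Union>C"
        proof (cases "X \<subseteq> Y")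
          case True thus ?thesis using X Y hb_add[OF good[of Y]] by blast
        next
          case False hence "Y \<subseteq> X" using chain X Y by blast
          thus ?thesis using X Y hb_add[OF good[of X]] by blast
        qed
      next
        fix x a c assume "(x,a) \<in> \<Union>C"
        then obtain X where X: "X \<in> C" "(x,a) \<in> X" by blast
        thus "(c *\<^sub>R x, c*a) \<in> \<Union>C" using hb_scale[OF good[of X]] by blast
      next
        fix x a assume "(x,a) \<in> \<Union>C"
        then obtain X where X: "X \<in> C" "(x,a) \<in> X" by blast
        thus "a \<le> p x" using hb_le[OF good[of X]] by blast
      qed
      thus ?thesis by blast
    qed
  qed
  then obtain M where M: "hb_good p M" and maxi: "\<And>X. hb_good p X \<Longrightarrow> M \<subseteq> X \<Longrightarrow> X = M" by blast
  have dom: "\<exists>a. (x0,a) \<in> M" for x0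
  proof (rule ccontr)
    assume nx: "\<not> (\<exists>a. (x0,a) \<in> M)"
    define S where "S = {a - p (x - x0) | x a. (x,a) \<in> M}"
    have bnd: "s \<le> p (y + x0) - b" if "s \<in> S" "(y,b) \<in> M" for s y b
    proof -
      obtain x a where xa: "(x,a) \<in> M" "s = a - p (x - x0)" using \<open>s \<in> S\<close> unfolding S_def by blast
      have "(x+y, a+b) \<in> M" using hb_add[OF M xa(1) that(2)] .
      hence "a + b \<le> p (x + y)" by (rule hb_le[OF M])
      also have "p (x + y) \<le> p (x - x0) + p (y + x0)" using sub[of "x - x0" "y + x0"] by simp
      finally show ?thesis using xa by simp
    qed
    have Sne: "S \<noteq> {}" using hb_zero[OF M] unfolding S_def by blast
    have Sbdd: "bdd_above S" using bnd[of _ 0 0] hb_zero[OF M] unfolding bdd_above_def by blast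
    define c where "c = Sup S"
    have c1: "a - p (x - x0) \<le> c" if "(x,a) \<in> M" for x a
      unfolding c_def using that Sbdd by (intro cSup_upper) (auto simp: S_def)
    have c2: "c \<le> p (y + x0) - b" if "(y,b) \<in> M" for y b
      unfolding c_def using Sne bnd that by (intro cSup_least) auto
    define H where "H = {(x + s *\<^sub>R x0, a + s * c) | x a s. (x,a) \<in> M}"
    have "hb_good p H"
    proof (rule hb_goodI)
      show "(0,0) \<in> H" unfolding H_def using hb_zero[OF M] by force
    next
      fix x a y b assume "(x,a) \<in> H" "(y,b) \<in> H"
      then obtain x1 a1 s1 x2 a2 s2 where 1: "(x1,a1) \<in> M" "x = x1 + s1 *\<^sub>R x0" "a = a1 + s1 * c"
        and 2: "(x2,a2) \<in> M" "y = x2 + s2 *\<^sub>R x0" "b = a2 + s2*c"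
        unfolding H_def by blast
      have "(x1 + x2, a1 + a2) \<in> M" using hb_add[OF M 1(1) 2(1)] .
      moreover have "x + y = (x1 + x2) + (s1 + s2) *\<^sub>R x0" "a + b = (a1+a2) + (s1+s2)*c"
        using 1 2 by (auto simp: algebra_simps scaleR_add_left)
      ultimately show "(x+y, a+b) \<in> H" unfolding H_def by blast
    next
      fix x a r assume "(x,a) \<in> H"
      then obtain x1 a1 s1 where 1: "(x1,a1) \<in> M" "x = x1 + s1 *\<^sub>R x0" "a = a1 + s1 * c"
        unfolding H_def by blast
      have "(r *\<^sub>R x1, r * a1) \<in> M" using hb_scale[OF M 1(1)] .
      moreover have "r *\<^sub>R x = r *\<^sub>R x1 + (r * s1) *\<^sub>R x0" "r * a = r * a1 + (r * s1)*c"
        using 1 by (auto simp: algebra_simps)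
      ultimately show "(r *\<^sub>R x, r*a) \<in> H" unfolding H_def by blast
    next
      fix x a assume "(x,a) \<in> H"
      then obtain x1 a1 s where 1: "(x1,a1) \<in> M" "x = x1 + s *\<^sub>R x0" "a = a1 + s * c"
        unfolding H_def by blast
      show "a \<le> p x"
      proof (cases "s = 0")
        case True hence "(x,a) = (x1,a1)" using 1 by simp
        thus ?thesis using hb_le[OF M 1(1)] by simp
      next
        case False
        have sc: "((1/\<bar>s\<bar>) *\<^sub>R x1, (1/\<bar>s\<bar>) * a1) \<in> M" using hb_scale[OF M 1(1)] .
        show ?thesis
        proof (cases "s > 0")
          case True
          have "c \<le> p ((1/s) *\<^sub>R x1 + x0) - (1/s) * a1" using c2[OF sc] True by simp
          hence "s * c \<le> s * p ((1/s) *\<^sub>R x1 + x0) - a1" using True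
            by (simp add: field_simps)
          also have "s * p ((1/s) *\<^sub>R x1 + x0) = p (s *\<^sub>R ((1/s) *\<^sub>R x1 + x0))"
            using hom[OF True] by simp
          also have "s *\<^sub>R ((1/s) *\<^sub>R x1 + x0) = x" using 1 True by (simp add: algebra_simps)
          finally show ?thesis using 1 by simp
        next
          case False
          hence sn: "s < 0" using \<open>s \<noteq> 0\<close> by simp
          have "(1/\<bar>s\<bar>) * a1 - p ((1/\<bar>s\<bar>) *\<^sub>R x1 - x0) \<le> c" using c1[OF sc] .
          hence "a1 - \<bar>s\<bar> * p ((1/\<bar>s\<bar>) *\<^sub>R x1 - x0) \<le> \<bar>s\<bar> * c" using sn
            by (simp add: field_simps)
          also have "\<bar>s\<bar> * p ((1/\<bar>s\<bar>) *\<^sub>R x1 - x0) = p (\<bar>s\<bar> *\<^sub>R ((1/\<bar>s\<bar>) *\<^sub>R x1 - x0))"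
            using hom[of "\<bar>s\<bar>"] sn by simp
          also have "\<bar>s\<bar> *\<^sub>R ((1/\<bar>s\<bar>) *\<^sub>R x1 - x0) = x" using 1 sn by (simp add: algebra_simps)
          finally show ?thesis using 1 sn by simp
        qed
      qed
    qed
    moreover have "M \<subseteq> H"
    proof
      fix z assume "z \<in> M"
      then obtain x a where "z = (x,a)" "(x,a) \<in> M" by (cases z) auto
      thus "z \<in> H" unfolding H_def by (rule_tac CollectI, rule_tac exI[of _ x], rule_tac exI[of _ a], rule_tac exI[of _ 0]) simp
    qed
    ultimately have "H = M" using maxi by blast
    moreover have "(x0, c) \<in> H" unfolding H_def using hb_zero[OF M]
      by (rule_tac CollectI, rule_tac exI[of _ 0], rule_tac exI[of _ 0], rule_tac exI[of _ 1]) simp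
    ultimately show False using nx by blast
  qed
  define \<mu> where "\<mu> x = (THE a. (x,a) \<in> M)" for x
  have mu: "(x, \<mu> x) \<in> M" for x
  proof -
    obtain a where a: "(x,a) \<in> M" using dom by blast
    have "\<mu> x = a" unfolding \<mu>_def
    proof (rule the_equality[where P="\<lambda>b. (x,b) \<in> M", OF a])
      fix b assume "(x,b) \<in> M" thus "b = a" using hb_good_fun[OF M p0 _ a] by blast
    qed
    thus ?thesis using a by simp
  qed
  have "linear \<mu>"
  proof (rule linearI)
    fix x y
    have "(x+y, \<mu> x + \<mu> y) \<in> M" using hb_add[OF M mu mu] .
    thus "\<mu> (x+y) = \<mu> x + \<mu> y" using hb_good_fun[OF M p0 mu] by metis
  next
    fix r x
    have "(r *\<^sub>R x, r * \<mu> x) \<in> M" using hb_scale[OF M mu] .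
    thus "\<mu> (r *\<^sub>R x) = r *\<^sub>R \<mu> x" using hb_good_fun[OF M p0 mu] by (metis real_scaleR_def)
  qed
  moreover have "\<mu> x \<le> p x" for x using hb_le[OF M mu] .
  ultimately show ?thesis by blast
qed

definition Sset :: "('a::euclidean_space \<Rightarrow>\<^sub>L 'b::banach) \<Rightarrow> 'b set \<Rightarrow> 'b \<Rightarrow> real \<Rightarrow> 'b set" where
  "Sset L K y0 n = {blinfun_apply L e - k + s *\<^sub>R y0 | e k s. norm e \<le> n \<and> k \<in> K \<and> \<bar>s\<bar> \<le> n}"

lemma cone_zero_in: assumes "cone K" "K \<noteq> {}" shows "0 \<in> K"
proof -
  obtain k where "k \<in> K" using assms by blast
  thus ?thesis using assms(1) unfolding cone_def by (metis order_refl scale_zero_left)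
qed

lemma cone_add: assumes "cone K" "convex K" "x \<in> K" "y \<in> K" shows "x + y \<in> K"
proof -
  have "(1/2) *\<^sub>R x + (1/2) *\<^sub>R y \<in> K" using assms(2-4) unfolding convex_def by auto
  hence "2 *\<^sub>R ((1/2) *\<^sub>R x + (1/2) *\<^sub>R y) \<in> K" using assms(1) unfolding cone_def by auto
  thus ?thesis by (simp add: algebra_simps)
qed

lemma Sset_closed:
  assumes "closed K" shows "closed (Sset L K y0 n)"
proof -
  let ?T = "(\<lambda>z. blinfun_apply L (fst z) + snd z *\<^sub>R y0) ` (cball 0 n \<times> cball 0 n)"
  have "compact ?T"
    by (intro compact_continuous_image compact_Times compact_cball continuous_intros) 
  moreover have "closed (uminus ` K)" using assms by (simp add: closed_negations)
  ultimately have "closed (\<Union>x\<in> uminus ` K. \<Union>y \<in> ?T. {x + y})" by (intro closed_compact_sums)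
  moreover have "(\<Union>x\<in> uminus ` K. \<Union>y \<in> ?T. {x + y}) = Sset L K y0 n"
  proof
    show "(\<Union>x\<in> uminus ` K. \<Union>y \<in> ?T. {x + y}) \<subseteq> Sset L K y0 n"
    proof
      fix z assume "z \<in> (\<Union>x\<in> uminus ` K. \<Union>y \<in> ?T. {x + y})"
      then obtain k e s where "k \<in> K" "norm e \<le> n" "\<bar>s\<bar> \<le> n" "z = - k + (blinfun_apply L e + s *\<^sub>R y0)"
        by auto
      thus "z \<in> Sset L K y0 n" unfolding Sset_def by force
    qed
  next
    show "Sset L K y0 n \<subseteq> (\<Union>x\<in> uminus ` K. \<Union>y \<in> ?T. {x + y})"
    proof
      fix z assume "z \<in> Sset L K y0 n"
      then obtain k e s where ek: "k \<in> K" "norm e \<le> n" "\<bar>s\<bar> \<le> n" "z = blinfun_apply L e - k + s *\<^sub>R y0"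
        unfolding Sset_def by blast
      have "(e,s) \<in> cball 0 n \<times> cball 0 n" using ek by auto
      hence "blinfun_apply L e + s *\<^sub>R y0 \<in> ?T" by force
      moreover have "-k \<in> uminus ` K" using ek by blast
      moreover have "z = -k + (blinfun_apply L e + s *\<^sub>R y0)" using ek by simp
      ultimately show "z \<in> (\<Union>x\<in> uminus ` K. \<Union>y \<in> ?T. {x + y})" by blast
    qed
  qed
  ultimately show ?thesis by simp
qed

lemma Sset_convex:
  assumes "convex K" shows "convex (Sset L K y0 n)"
  unfolding convex_def
proof (intro ballI allI impI)
  fix x y and u v :: real assume x: "x \<in> Sset L K y0 n" and y: "y \<in> Sset L K y0 n" and uv: "0 \<le> u" "0 \<le> v" "u + v = 1"
  obtain e1 k1 s1 where 1: "x = blinfun_apply L e1 - k1 + s1 *\<^sub>R y0" "norm e1 \<le> n" "k1 \<in> K" "\<bar>s1\<bar> \<le> n"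
    using x unfolding Sset_def by blast
  obtain e2 k2 s2 where 2: "y = blinfun_apply L e2 - k2 + s2 *\<^sub>R y0" "norm e2 \<le> n" "k2 \<in> K" "\<bar>s2\<bar> \<le> n"
    using y unfolding Sset_def by blast
  have "u *\<^sub>R x + v *\<^sub>R y = blinfun_apply L (u *\<^sub>R e1 + v *\<^sub>R e2) - (u *\<^sub>R k1 + v *\<^sub>R k2) + (u * s1 + v * s2) *\<^sub>R y0"
    unfolding 1(1) 2(1) by (simp add: algebra_simps blinfun.add_right blinfun.scaleR_right)
  moreover have "norm (u *\<^sub>R e1 + v *\<^sub>R e2) \<le> n"
  proof -
    have "norm (u *\<^sub>R e1 + v *\<^sub>R e2) \<le> u * norm e1 + v * norm e2"
      using uv norm_triangle_ineq[of "u *\<^sub>R e1" "v *\<^sub>R e2"] by simp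
    also have "\<dots> \<le> u * n + v * n" using uv 1 2 by (simp add: add_mono mult_left_mono)
    also have "\<dots> = (u+v) * n" by (simp add: algebra_simps)
    finally show ?thesis using uv by simp
  qed
  moreover have "\<bar>u * s1 + v * s2\<bar> \<le> n"
  proof -
    have "\<bar>u * s1 + v * s2\<bar> \<le> u * \<bar>s1\<bar> + v * \<bar>s2\<bar>" using uv abs_triangle_ineq[of "u * s1" "v * s2"] by (simp add: abs_mult)
    also have "\<dots> \<le> u * n + v * n" using uv 1 2 by (simp add: add_mono mult_left_mono)
    also have "\<dots> = (u+v) * n" by (simp add: algebra_simps)
    finally show ?thesis using uv by simp
  qed
  moreover have "u *\<^sub>R k1 + v *\<^sub>R k2 \<in> K" by (rule convexD[OF assms 1(3) 2(3) uv])
  ultimately show "u *\<^sub>R x + v *\<^sub>R y \<in> Sset L K y0 n" unfolding Sset_def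
    by (intro CollectI exI[of _ "u *\<^sub>R e1 + v *\<^sub>R e2"] exI[of _ "u *\<^sub>R k1 + v *\<^sub>R k2"] exI[of _ "u * s1 + v * s2"]) simp
qed

lemma Sset_memI: "norm e \<le> n \<Longrightarrow> k \<in> K \<Longrightarrow> \<bar>s\<bar> \<le> n \<Longrightarrow> blinfun_apply L e - k + s *\<^sub>R y0 \<in> Sset L K y0 n"
  unfolding Sset_def by blast

lemma Sset_mono: "n \<le> n' \<Longrightarrow> Sset L K y0 n \<subseteq> Sset L K y0 n'"
  unfolding Sset_def by force

lemma openness:
  fixes L :: "'a::euclidean_space \<Rightarrow>\<^sub>L 'b::banach"
  assumes Kc: "closed K" and Kv: "convex K" and Kn: "cone K" and Kne: "K \<noteq> {}"
    and RCQ: "0 \<in> interior {y0 + blinfun_apply L e - k | e k. k \<in> K}"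
  shows "\<exists>M>0. \<forall>y. \<exists>e k s. y = blinfun_apply L e - k + s *\<^sub>R y0 \<and> k \<in> K \<and> norm e \<le> M * norm y \<and> \<bar>s\<bar> \<le> M * norm y"
proof -
  have K0: "0 \<in> K" using Kn Kne by (rule cone_zero_in)
  obtain \<delta> where \<delta>: "\<delta> > 0" "ball 0 \<delta> \<subseteq> {y0 + blinfun_apply L e - k | e k. k \<in> K}"
    using RCQ by (meson mem_interior)
  have cover: "\<exists>n::nat. y \<in> Sset L K y0 (real n)" for y
  proof (cases "y = 0")
    case True
    hence "y = blinfun_apply L 0 - 0 + 0 *\<^sub>R y0" by simp
    moreover have "blinfun_apply L 0 - 0 + 0 *\<^sub>R y0 \<in> Sset L K y0 (real 0)" using K0 by (intro Sset_memI) auto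
    ultimately show ?thesis by blast
  next
    case False
    define c where "c = 2 * norm y / \<delta>"
    have c: "c > 0" using False \<delta> by (simp add: c_def)
    have "(1/c) *\<^sub>R y \<in> ball 0 \<delta>" using False \<delta> by (simp add: c_def)
    then obtain e k where ek: "(1/c) *\<^sub>R y = y0 + blinfun_apply L e - k" "k \<in> K" using \<delta> by blast
    have "y = c *\<^sub>R ((1/c) *\<^sub>R y)" using c by simp
    also have "\<dots> = c *\<^sub>R (y0 + blinfun_apply L e - k)" by (simp only: ek(1))
    also have "\<dots> = blinfun_apply L (c *\<^sub>R e) - c *\<^sub>R k + c *\<^sub>R y0"
      by (simp add: algebra_simps blinfun.scaleR_right)
    finally have y: "y = blinfun_apply L (c *\<^sub>R e) - c *\<^sub>R k + c *\<^sub>R y0" .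
    obtain n::nat where n: "max (norm (c *\<^sub>R e)) c \<le> real n" using real_arch_simple by blast
    have "c *\<^sub>R k \<in> K" using Kn ek c unfolding cone_def by auto
    hence "y \<in> Sset L K y0 (real n)" unfolding y using n c by (intro Sset_memI) auto
    thus ?thesis by blast
  qed
  have "\<exists>n::nat. interior (Sset L K y0 (real n)) \<noteq> {}"
  proof (rule ccontr)
    assume "\<not> ?thesis"
    hence emp: "\<And>n::nat. interior (Sset L K y0 (real n)) = {}" by blast
    have "euclidean interior_of \<Union>(range (\<lambda>n::nat. Sset L K y0 (real n))) = {}"
    proof (rule Baire_category_alt)
      show "completely_metrizable_space (euclidean::'b topology) \<or> locally_compact_space (euclidean::'b topology) \<and> regular_space (euclidean::'b topology)"
        using completely_metrizable_space_euclidean by blast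
      show "countable (range (\<lambda>n::nat. Sset L K y0 (real n)))" by simp
      fix T assume "T \<in> range (\<lambda>n::nat. Sset L K y0 (real n))"
      then obtain n::nat where T: "T = Sset L K y0 (real n)" by blast
      show "closedin euclidean T \<and> euclidean interior_of T = {}"
        unfolding T using Sset_closed[OF Kc] emp[of n] closed_closedin by auto
    qed
    moreover have "\<Union>(range (\<lambda>n::nat. Sset L K y0 (real n))) = UNIV" using cover by blast
    ultimately show False by simp
  qed
  then obtain n::nat and z \<rho> where z: "\<rho> > 0" "ball z \<rho> \<subseteq> Sset L K y0 (real n)"
    by (metis all_not_in_conv mem_interior)
  obtain n'::nat where n': "-z \<in> Sset L K y0 (real n')" using cover by blast
  define N where "N = max n n'"
  have SN: "ball z \<rho> \<subseteq> Sset L K y0 (real N)" "-z \<in> Sset L K y0 (real N)"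
  proof -
    have "Sset L K y0 (real n) \<subseteq> Sset L K y0 (real N)" by (rule Sset_mono) (simp add: N_def)
    moreover have "Sset L K y0 (real n') \<subseteq> Sset L K y0 (real N)" by (rule Sset_mono) (simp add: N_def)
    ultimately show "ball z \<rho> \<subseteq> Sset L K y0 (real N)" "-z \<in> Sset L K y0 (real N)" using z n' by blast+
  qed
  have ball0: "ball 0 (\<rho>/2) \<subseteq> Sset L K y0 (real N)"
  proof
    fix y assume "y \<in> ball (0::'b) (\<rho>/2)"
    hence "z + 2 *\<^sub>R y \<in> ball z \<rho>" by (simp add: dist_norm)
    hence "z + 2 *\<^sub>R y \<in> Sset L K y0 (real N)" using SN by blast
    hence "(1/2) *\<^sub>R (z + 2 *\<^sub>R y) + (1/2) *\<^sub>R (-z) \<in> Sset L K y0 (real N)"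
      by (rule convexD[OF Sset_convex[OF Kv] _ SN(2)]) auto
    thus "y \<in> Sset L K y0 (real N)" by (simp add: algebra_simps)
  qed
  define M where "M = 4 * (real N + 1) / \<rho>"
  have M: "M > 0" using z by (simp add: M_def)
  have "\<exists>e k s. y = blinfun_apply L e - k + s *\<^sub>R y0 \<and> k \<in> K \<and> norm e \<le> M * norm y \<and> \<bar>s\<bar> \<le> M * norm y" for y
  proof (cases "y = 0")
    case True
    have "y = blinfun_apply L 0 - 0 + 0 *\<^sub>R y0 \<and> 0 \<in> K \<and> norm (0::'a) \<le> M * norm y \<and> \<bar>0::real\<bar> \<le> M * norm y"
      using K0 True by simp
    thus ?thesis by blast
  next
    case False
    define c where "c = 4 * norm y / \<rho>"
    have c: "c > 0" using False z by (simp add: c_def)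
    have "(1/c) *\<^sub>R y \<in> ball 0 (\<rho>/2)" using False z by (simp add: c_def)
    then obtain e k s where eks: "(1/c) *\<^sub>R y = blinfun_apply L e - k + s *\<^sub>R y0" "k \<in> K" "norm e \<le> real N" "\<bar>s\<bar> \<le> real N"
      using ball0 unfolding Sset_def by blast
    have "y = c *\<^sub>R ((1/c) *\<^sub>R y)" using c by simp
    also have "\<dots> = c *\<^sub>R (blinfun_apply L e - k + s *\<^sub>R y0)" by (simp only: eks(1))
    also have "\<dots> = blinfun_apply L (c *\<^sub>R e) - c *\<^sub>R k + (c * s) *\<^sub>R y0"
      by (simp add: algebra_simps blinfun.scaleR_right)
    finally have y: "y = blinfun_apply L (c *\<^sub>R e) - c *\<^sub>R k + (c * s) *\<^sub>R y0" .
    have ck: "c *\<^sub>R k \<in> K" using Kn eks c unfolding cone_def by auto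
    have "norm (c *\<^sub>R e) \<le> c * real N" using c eks by (simp add: mult_left_mono)
    also have "\<dots> \<le> M * norm y" using c z False by (simp add: M_def c_def field_simps)
    finally have 1: "norm (c *\<^sub>R e) \<le> M * norm y" .
    have "\<bar>c * s\<bar> \<le> c * real N" using c eks by (simp add: abs_mult mult_left_mono)
    also have "\<dots> \<le> M * norm y" using c z False by (simp add: M_def c_def field_simps)
    finally have 2: "\<bar>c * s\<bar> \<le> M * norm y" .
    show ?thesis using y ck 1 2 by blast
  qed
  thus ?thesis using M by blast
qed

lemma LG_step_bound:
  fixes G :: "'a::euclidean_space \<Rightarrow> 'b::banach" and DG :: "'a \<Rightarrow> 'a \<Rightarrow>\<^sub>L 'b"
  assumes G_diff: "\<And>x. (G has_derivative blinfun_apply (DG x)) (at x)"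
    and B: "\<And>x. x \<in> ball xs \<rho>1 \<Longrightarrow> norm (DG x - DG xs) \<le> B"
    and x: "x \<in> ball xs \<rho>1" and xe: "x + e \<in> ball xs \<rho>1"
  shows "norm (G (x + e) - G x - blinfun_apply (DG xs) e) \<le> norm e * B"
proof -
  have S: "x + t *\<^sub>R ((x + e) - x) \<in> ball xs \<rho>1" if "t \<in> {0..1}" for t
    using convexD_alt[OF convex_ball x xe, of t] that by (simp add: algebra_simps)
  have D: "(G has_derivative blinfun_apply (DG y)) (at y within ball xs \<rho>1)" for y
    using G_diff by (rule has_derivative_at_withinI)
  have Bd: "onorm (blinfun_apply (DG y) - blinfun_apply (DG xs)) \<le> B" if y: "y \<in> ball xs \<rho>1" for y
  proof -
    have "blinfun_apply (DG y) - blinfun_apply (DG xs) = blinfun_apply (DG y - DG xs)"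
      by (rule ext) (simp add: blinfun.diff_left)
    thus ?thesis using B[OF y] by (simp add: norm_blinfun.rep_eq)
  qed
  have X0: "xs \<in> ball xs \<rho>1" using x by (simp add: dist_norm) (metis norm_ge_zero le_less_trans)
  have "norm (G (x + e) - G x - blinfun_apply (DG xs) ((x + e) - x)) \<le> norm ((x + e) - x) * B"
    by (rule differentiable_bound_linearization[OF S D Bd X0])
  thus ?thesis by simp
qed

lemma geom_convergent:
  fixes a :: "nat \<Rightarrow> 'c::banach"
  assumes "\<And>n. norm (a (Suc n) - a n) \<le> C * (1/2)^n"
  shows "convergent a"
proof -
  have "summable (\<lambda>n. C * (1/2::real)^n)" by (intro summable_mult summable_geometric) simp
  hence "summable (\<lambda>n. norm (a (Suc n) - a n))"
    by (rule summable_comparison_test') (use assms in auto)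
  hence sm: "summable (\<lambda>n. a (Suc n) - a n)" by (rule summable_norm_cancel)
  have "(\<lambda>n. a 0 + (\<Sum>i<n. a (Suc i) - a i)) \<longlonglongrightarrow> a 0 + suminf (\<lambda>n. a (Suc n) - a n)"
    by (intro tendsto_add tendsto_const summable_LIMSEQ sm)
  moreover have "(\<lambda>n. a 0 + (\<Sum>i<n. a (Suc i) - a i)) = a"
    by (rule ext) (simp add: sum_lessThan_telescope)
  ultimately show ?thesis unfolding convergent_def by auto
qed

lemma metric_regularity:
  fixes G :: "'a::euclidean_space \<Rightarrow> 'b::banach" and DG :: "'a \<Rightarrow> 'a \<Rightarrow>\<^sub>L 'b"
  assumes Kc: "closed K" and Kv: "convex K" and Kn: "cone K"
    and y0K: "G xs \<in> K"
    and G_diff: "\<And>x. (G has_derivative blinfun_apply (DG x)) (at x)"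
    and DGc: "continuous (at xs) DG"
    and M: "M > 0"
    and opn: "\<forall>y. \<exists>e k s. y = blinfun_apply (DG xs) e - k + s *\<^sub>R G xs \<and> k \<in> K \<and> norm e \<le> M * norm y \<and> \<bar>s\<bar> \<le> M * norm y"
  shows "\<exists>\<rho>>0. \<forall>x z. norm (x - xs) < \<rho> \<longrightarrow> z \<in> K \<longrightarrow> norm (z - G xs) < \<rho> \<longrightarrow> norm (G x - z) < \<rho> \<longrightarrow>
            (\<exists>x'. G x' \<in> K \<and> norm (x' - x) \<le> 2 * M * norm (G x - z))"
proof -
  define y0 where "y0 = G xs"
  define L where "L = DG xs"
  obtain ee kk ss where rep: "\<And>y. y = blinfun_apply L (ee y) - kk y + ss y *\<^sub>R y0 \<and> kk y \<in> K \<and> norm (ee y) \<le> M * norm y \<and> \<bar>ss y\<bar> \<le> M * norm y"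
    using opn unfolding L_def y0_def by metis
  obtain \<rho>1 where \<rho>1: "\<rho>1 > 0" "\<And>x. x \<in> ball xs \<rho>1 \<Longrightarrow> norm (DG x - L) \<le> 1 / (4 * M)"
  proof -
    have "1 / (4 * M) > 0" using M by simp
    then obtain d where d: "d > 0" "\<And>x. dist x xs < d \<Longrightarrow> dist (DG x) (DG xs) < 1 / (4 * M)"
      using DGc unfolding continuous_at_eps_delta by blast
    show ?thesis
      by (rule that[OF d(1)]) (use d(2) in \<open>auto simp: L_def dist_norm norm_minus_commute less_imp_le\<close>)
  qed
  define \<beta> where "\<beta> = min 1 (1 / (4 * M))"
  have \<beta>: "\<beta> > 0" using M by (simp add: \<beta>_def)
  define M2 where "M2 = norm L * M + M * norm y0 + 1 + M * (norm y0 + 1)"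
  have M2: "M2 > 0"
  proof -
    have "0 \<le> norm L * M" "0 \<le> M * norm y0" "0 \<le> M * (norm y0 + 1)" using M by simp_all
    thus ?thesis unfolding M2_def by linarith
  qed
  define \<rho> where "\<rho> = min (\<rho>1 / (1 + 2 * M)) (min (\<beta> / (1 + 2 * M2)) (1 / M))"
  have \<rho>: "\<rho> > 0" using \<rho>1 \<beta> M M2 by (simp add: \<rho>_def)
  have \<rho>_1: "\<rho> + 2 * M * \<rho> \<le> \<rho>1"
  proof -
    have "\<rho> \<le> \<rho>1 / (1 + 2 * M)" unfolding \<rho>_def by simp
    hence "\<rho> * (1 + 2 * M) \<le> \<rho>1" using M by (simp add: pos_le_divide_eq)
    thus ?thesis by (simp add: algebra_simps)
  qed
  have \<rho>_2: "\<rho> + 2 * M2 * \<rho> \<le> \<beta>"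
  proof -
    have "\<rho> \<le> \<beta> / (1 + 2 * M2)" unfolding \<rho>_def by simp
    hence "\<rho> * (1 + 2 * M2) \<le> \<beta>" using M2 by (simp add: pos_le_divide_eq)
    thus ?thesis by (simp add: algebra_simps)
  qed
  have \<rho>_3: "M * \<rho> \<le> 1"
  proof -
    have "\<rho> \<le> 1 / M" unfolding \<rho>_def by simp
    thus ?thesis using M by (simp add: pos_le_divide_eq mult.commute)
  qed
  define step where "step p = (let x = fst p; z = snd p; r = G x - z; s = ss (- r) in
      (x + ee (- r), z + kk (- r) - s *\<^sub>R (if s > 0 then z else y0)))" for p
  have main: "\<exists>x'. G x' \<in> K \<and> norm (x' - x0) \<le> 2 * M * norm (G x0 - z0)"
    if x0: "norm (x0 - xs) < \<rho>" and z0: "z0 \<in> K" "norm (z0 - y0) < \<rho>" and r0: "norm (G x0 - z0) < \<rho>" for x0 z0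
  proof -
    define R where "R = norm (G x0 - z0)"
    define st where "st = rec_nat (x0, z0) (\<lambda>_. step)"
    have st0: "st 0 = (x0, z0)" and stS: "\<And>n. st (Suc n) = step (st n)" by (simp_all add: st_def)
    define xx where "xx n = fst (st n)" for n
    define zz where "zz n = snd (st n)" for n
    define P where "P n \<longleftrightarrow> (zz n \<in> K \<and> norm (G (xx n) - zz n) \<le> (1/2)^n * R
       \<and> norm (xx n - x0) \<le> 2 * M * R * (1 - (1/2)^n) \<and> norm (zz n - z0) \<le> 2 * M2 * R * (1 - (1/2)^n))" for n
    have stepl: "P (Suc n) \<and> norm (xx (Suc n) - xx n) \<le> M * ((1/2)^n * R) \<and> norm (zz (Suc n) - zz n) \<le> M2 * ((1/2)^n * R)"
      if Pn: "P n" for n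
    proof -
      define x where "x = xx n"
      define z where "z = zz n"
      define r where "r = G x - z"
      define e where "e = ee (- r)"
      define k where "k = kk (- r)"
      define s where "s = ss (- r)"
      have IH: "z \<in> K" "norm r \<le> (1/2)^n * R" "norm (x - x0) \<le> 2 * M * R * (1 - (1/2)^n)"
        "norm (z - z0) \<le> 2 * M2 * R * (1 - (1/2)^n)" using Pn unfolding P_def by (simp_all add: x_def z_def r_def)
      have repr: "- r = blinfun_apply L e - k + s *\<^sub>R y0" "k \<in> K" "norm e \<le> M * norm r" "\<bar>s\<bar> \<le> M * norm r"
        using rep[of "- r"] by (simp_all add: e_def k_def s_def)
      have xS: "xx (Suc n) = x + e" and zS: "zz (Suc n) = z + k - s *\<^sub>R (if s > 0 then z else y0)"
        by (simp_all add: xx_def zz_def stS step_def Let_def x_def z_def r_def e_def k_def s_def)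
      have R0: "R \<ge> 0" by (simp add: R_def)
      have Rr: "R < \<rho>" using r0 by (simp add: R_def)
      have pw: "(1/2::real)^n \<le> 1" by (simp add: power_le_one)
      have pw0: "(1/2::real)^n \<ge> 0" by simp
      have nr: "norm r \<le> R" using IH(2) mult_left_le_one_le[OF R0 pw0 pw] by linarith
      have ne: "norm e \<le> M * ((1/2)^n * R)" using repr(3) mult_left_mono[OF IH(2), of M] M by linarith
      have sM: "\<bar>s\<bar> \<le> M * ((1/2)^n * R)" using repr(4) mult_left_mono[OF IH(2), of M] M by linarith
      have xin: "x \<in> ball xs \<rho>1"
      proof -
        have "norm (x - xs) \<le> norm (x - x0) + norm (x0 - xs)" using norm_triangle_ineq[of "x - x0" "x0 - xs"] by simp
        also have "\<dots> < 2 * M * R + \<rho>"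
        proof -
          have "2 * M * R * (1 - (1/2)^n) \<le> 2 * M * R" using M R0 pw0 by (simp add: mult_left_le)
          thus ?thesis using IH(3) x0 by linarith
        qed
        also have "\<dots> \<le> 2 * M * \<rho> + \<rho>" using M Rr by simp
        finally show ?thesis using \<rho>_1 by (simp add: dist_norm norm_minus_commute)
      qed
      have xnew: "norm (x + e - x0) \<le> 2 * M * R * (1 - (1/2)^(Suc n))"
      proof -
        have "norm (x + e - x0) \<le> norm (x - x0) + norm e" using norm_triangle_ineq[of "x - x0" e] by (simp add: algebra_simps)
        also have "\<dots> \<le> 2 * M * R * (1 - (1/2)^n) + M * ((1/2)^n * R)" using IH(3) ne by simp
        also have "\<dots> = 2 * M * R * (1 - (1/2)^(Suc n))" by (simp add: algebra_simps)
        finally show ?thesis .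
      qed
      have xein: "x + e \<in> ball xs \<rho>1"
      proof -
        have "norm (x + e - xs) \<le> norm (x + e - x0) + norm (x0 - xs)" using norm_triangle_ineq[of "x + e - x0" "x0 - xs"] by simp
        also have "\<dots> < 2 * M * R + \<rho>"
        proof -
          have "2 * M * R * (1 - (1/2)^(Suc n)) \<le> 2 * M * R" using M R0 by (simp add: mult_left_le)
          thus ?thesis using xnew x0 by linarith
        qed
        also have "\<dots> \<le> 2 * M * \<rho> + \<rho>" using M Rr by simp
        finally show ?thesis using \<rho>_1 by (simp add: dist_norm norm_minus_commute)
      qed
      have zy0: "norm (z - y0) \<le> \<beta>"
      proof -
        have "norm (z - y0) \<le> norm (z - z0) + norm (z0 - y0)" using norm_triangle_ineq[of "z - z0" "z0 - y0"] by simp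
        also have "\<dots> \<le> 2 * M2 * R + \<rho>"
        proof -
          have "2 * M2 * R * (1 - (1/2)^n) \<le> 2 * M2 * R" using M2 R0 pw0 by (simp add: mult_left_le)
          thus ?thesis using IH(4) z0 by linarith
        qed
        also have "\<dots> \<le> 2 * M2 * \<rho> + \<rho>" using M2 Rr by simp
        finally show ?thesis using \<rho>_2 by simp
      qed
      have s1: "\<bar>s\<bar> \<le> 1"
      proof -
        have "\<bar>s\<bar> \<le> M * R" using repr(4) mult_left_mono[OF nr, of M] M by linarith
        also have "\<dots> \<le> M * \<rho>" using M Rr by simp
        finally show ?thesis using \<rho>_3 by simp
      qed
      have znewK: "z + k - s *\<^sub>R (if s > 0 then z else y0) \<in> K"
      proof (cases "s > 0")
        case True
        have "(1 - s) *\<^sub>R z \<in> K" using Kn IH(1) s1 True unfolding cone_def by auto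
        hence "(1 - s) *\<^sub>R z + k \<in> K" using cone_add[OF Kn Kv _ repr(2)] by blast
        thus ?thesis using True by (simp add: algebra_simps)
      next
        case False
        have "(- s) *\<^sub>R y0 \<in> K" using Kn y0K False unfolding cone_def y0_def by (metis neg_0_le_iff_le not_less)
        hence "z + k + (- s) *\<^sub>R y0 \<in> K" using cone_add[OF Kn Kv] IH(1) repr(2) by blast
        thus ?thesis using False by (simp add: algebra_simps)
      qed
      have rnew: "G (x + e) - (z + k - s *\<^sub>R (if s > 0 then z else y0)) =
          (G (x + e) - G x - blinfun_apply L e) + s *\<^sub>R ((if s > 0 then z else y0) - y0)"
      proof -
        have "k = blinfun_apply L e + s *\<^sub>R y0 + r" using repr(1) by (simp add: algebra_simps)
        thus ?thesis unfolding r_def by (simp add: algebra_simps)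
      qed
      have b1: "norm (G (x + e) - G x - blinfun_apply L e) \<le> (1/2)^n * R / 4"
      proof -
        have "norm (G (x + e) - G x - blinfun_apply L e) \<le> norm e * (1 / (4 * M))"
          using LG_step_bound[OF G_diff, of xs \<rho>1 "1 / (4 * M)" x e] \<rho>1(2) xin xein by (simp add: L_def)
        also have "\<dots> \<le> M * ((1/2)^n * R) * (1 / (4 * M))" using ne M by (simp add: pos_divide_le_eq mult.commute)
        also have "\<dots> = (1/2)^n * R / 4" using M by simp
        finally show ?thesis .
      qed
      have b2: "norm (s *\<^sub>R ((if s > 0 then z else y0) - y0)) \<le> (1/2)^n * R / 4"
      proof -
        have "norm ((if s > 0 then z else y0) - y0) \<le> 1 / (4 * M)" using zy0 \<beta>_def M by auto
        hence "norm (s *\<^sub>R ((if s > 0 then z else y0) - y0)) \<le> \<bar>s\<bar> * (1 / (4 * M))"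
          unfolding norm_scaleR by (rule mult_left_mono) simp_all
        also have "\<dots> \<le> (M * ((1/2)^n * R)) * (1 / (4 * M))"
          using mult_right_mono[OF sM, of "1 / (4 * M)"] M by simp
        also have "\<dots> = (1/2)^n * R / 4" using M by simp
        finally show ?thesis .
      qed
      have rS: "norm (G (xx (Suc n)) - zz (Suc n)) \<le> (1/2)^(Suc n) * R"
      proof -
        have "norm (G (xx (Suc n)) - zz (Suc n)) \<le> norm (G (x + e) - G x - blinfun_apply L e) + norm (s *\<^sub>R ((if s > 0 then z else y0) - y0))"
          unfolding xS zS rnew by (rule norm_triangle_ineq)
        also have "\<dots> \<le> (1/2)^(Suc n) * R" using b1 b2 by simp
        finally show ?thesis .
      qed
      have zstep: "norm (zz (Suc n) - z) \<le> M2 * ((1/2)^n * R)"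
      proof -
        have zzd: "zz (Suc n) - z = k - s *\<^sub>R (if s > 0 then z else y0)" unfolding zS by simp
        have nk: "norm k \<le> norm L * norm e + \<bar>s\<bar> * norm y0 + norm r"
        proof -
          have "k = blinfun_apply L e + s *\<^sub>R y0 + r" using repr(1) by (simp add: algebra_simps)
          hence "norm k \<le> norm (blinfun_apply L e + s *\<^sub>R y0) + norm r" by (simp add: norm_triangle_ineq)
          moreover have "norm (blinfun_apply L e + s *\<^sub>R y0) \<le> norm (blinfun_apply L e) + norm (s *\<^sub>R y0)" by (rule norm_triangle_ineq)
          ultimately have "norm k \<le> norm (blinfun_apply L e) + norm (s *\<^sub>R y0) + norm r" by linarith
          thus ?thesis using norm_blinfun[of L e] by simp
        qed
        have nz: "norm (if s > 0 then z else y0) \<le> norm y0 + 1"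
        proof -
          have "norm z \<le> norm y0 + norm (z - y0)" using norm_triangle_ineq[of y0 "z - y0"] by simp
          thus ?thesis using zy0 \<beta>_def by auto
        qed
        have "norm (zz (Suc n) - z) \<le> norm k + \<bar>s\<bar> * norm (if s > 0 then z else y0)"
          unfolding zzd using norm_triangle_ineq4[of k "s *\<^sub>R (if s > 0 then z else y0)"] by simp
        also have "\<dots> \<le> (norm L * norm e + \<bar>s\<bar> * norm y0 + norm r) + \<bar>s\<bar> * (norm y0 + 1)"
          using nk nz by (intro add_mono mult_left_mono) auto
        also have "\<dots> \<le> (norm L * (M * ((1/2)^n * R)) + (M * ((1/2)^n * R)) * norm y0 + (1/2)^n * R) + (M * ((1/2)^n * R)) * (norm y0 + 1)"
          using ne sM IH(2) by (intro add_mono mult_left_mono mult_right_mono) auto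
        also have "\<dots> = M2 * ((1/2)^n * R)" unfolding M2_def by (simp add: algebra_simps)
        finally show ?thesis .
      qed
      have zS2: "norm (zz (Suc n) - z0) \<le> 2 * M2 * R * (1 - (1/2)^(Suc n))"
      proof -
        have "norm (zz (Suc n) - z0) \<le> norm (zz (Suc n) - z) + norm (z - z0)" using norm_triangle_ineq[of "zz (Suc n) - z" "z - z0"] by simp
        also have "\<dots> \<le> M2 * ((1/2)^n * R) + 2 * M2 * R * (1 - (1/2)^n)" using zstep IH(4) by simp
        also have "\<dots> = 2 * M2 * R * (1 - (1/2)^(Suc n))" by (simp add: algebra_simps)
        finally show ?thesis .
      qed
      show ?thesis using znewK rS xnew zS2 ne zstep unfolding xS zS P_def x_def z_def by simp
    qed
    have inv: "P n" for n
    proof (induction n)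
      case 0 thus ?case using z0 by (simp add: P_def xx_def zz_def st0 R_def)
    next
      case (Suc n) thus ?case using stepl by blast
    qed
    have R0: "R \<ge> 0" by (simp add: R_def)
    have dx: "norm (xx (Suc n) - xx n) \<le> (M * R) * (1/2)^n" for n
    proof -
      have "norm (xx (Suc n) - xx n) \<le> M * ((1/2)^n * R)" using stepl[OF inv] by blast
      thus ?thesis by (simp add: ac_simps)
    qed
    have dz: "norm (zz (Suc n) - zz n) \<le> (M2 * R) * (1/2)^n" for n
    proof -
      have "norm (zz (Suc n) - zz n) \<le> M2 * ((1/2)^n * R)" using stepl[OF inv] by blast
      thus ?thesis by (simp add: ac_simps)
    qed
    have "convergent xx" using dx by (rule geom_convergent)
    then obtain xl where xl: "xx \<longlonglongrightarrow> xl" unfolding convergent_def by blast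
    have "convergent zz" using dz by (rule geom_convergent)
    then obtain zl where zl: "zz \<longlonglongrightarrow> zl" unfolding convergent_def by blast
    have "isCont G xl" using G_diff by (rule has_derivative_continuous)
    hence Gx: "(\<lambda>n. G (xx n)) \<longlonglongrightarrow> G xl" using xl by (rule isCont_tendsto_compose)
    have "(\<lambda>n. (1/2::real)^n * R) \<longlonglongrightarrow> 0"
      by (intro tendsto_mult_left_zero LIMSEQ_power_zero) simp
    hence "(\<lambda>n. G (xx n) - zz n) \<longlonglongrightarrow> 0"
    proof (rule Lim_null_comparison[rotated])
      show "\<forall>\<^sub>F n in sequentially. norm (G (xx n) - zz n) \<le> (1/2)^n * R"
        using inv unfolding P_def by (intro always_eventually allI) blast
    qed
    moreover have "(\<lambda>n. G (xx n) - zz n) \<longlonglongrightarrow> G xl - zl" using Gx zl by (rule tendsto_diff)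
    ultimately have "G xl - zl = 0" using LIMSEQ_unique by blast
    hence Gzl: "G xl = zl" by simp
    have "zl \<in> K" proof (rule closed_sequentially[OF Kc _ zl])
      fix n show "zz n \<in> K" using inv[of n] unfolding P_def by blast
    qed
    moreover have "norm (xl - x0) \<le> 2 * M * R"
    proof (rule Lim_norm_ubound[of sequentially "\<lambda>n. xx n - x0"])
      show "(\<lambda>n. xx n - x0) \<longlonglongrightarrow> xl - x0" using xl by (intro tendsto_diff tendsto_const)
      show "\<forall>\<^sub>F n in sequentially. norm (xx n - x0) \<le> 2 * M * R"
      proof (intro always_eventually allI)
        fix n
        have "2 * M * R * (1 - (1/2)^n) \<le> 2 * M * R" using M R0 by (simp add: mult_left_le)
        thus "norm (xx n - x0) \<le> 2 * M * R" using inv[of n] unfolding P_def by linarith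
      qed
    qed simp
    ultimately show ?thesis using Gzl unfolding R_def by (intro exI[of _ xl]) simp
  qed
  show ?thesis
  proof (intro exI[of _ \<rho>] conjI \<rho> allI impI)
    fix x z assume "norm (x - xs) < \<rho>" "z \<in> K" "norm (z - G xs) < \<rho>" "norm (G x - z) < \<rho>"
    thus "\<exists>x'. G x' \<in> K \<and> norm (x' - x) \<le> 2 * M * norm (G x - z)" by (intro main) (simp_all add: y0_def)
  qed
qed

lemma taylor2:
  fixes \<phi> :: "'a::real_normed_vector \<Rightarrow> 'c::real_normed_vector" and D :: "'a \<Rightarrow> 'a \<Rightarrow> 'c" and B :: "'a \<Rightarrow> 'a \<Rightarrow> 'c"
  assumes r: "r > 0" and D: "\<And>x. x \<in> ball xs r \<Longrightarrow> (\<phi> has_derivative D x) (at x)"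
    and Bh: "\<And>s u v. B (s *\<^sub>R u) v = s *\<^sub>R B u v"
    and Dlim: "\<And>\<epsilon>. \<epsilon> > 0 \<Longrightarrow> \<exists>\<delta>>0. \<forall>u v. norm u < \<delta> \<longrightarrow> norm (D (xs + u) v - D xs v - B u v) \<le> \<epsilon> * norm u * norm v"
    and eps: "\<epsilon> > 0"
  shows "\<exists>\<delta>>0. \<forall>v. norm v < \<delta> \<longrightarrow> norm (\<phi> (xs + v) - \<phi> xs - D xs v - (1/2) *\<^sub>R B v v) \<le> \<epsilon> * (norm v)^2"
proof -
  obtain \<delta>0 where \<delta>0: "\<delta>0 > 0" "\<And>u v. norm u < \<delta>0 \<Longrightarrow> norm (D (xs + u) v - D xs v - B u v) \<le> \<epsilon> * norm u * norm v"
    using Dlim[OF eps] by blast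
  define \<delta> where "\<delta> = min \<delta>0 r"
  have \<delta>: "\<delta> > 0" using \<delta>0 r by (simp add: \<delta>_def)
  have "norm (\<phi> (xs + v) - \<phi> xs - D xs v - (1/2) *\<^sub>R B v v) \<le> \<epsilon> * (norm v)^2" if v: "norm v < \<delta>" for v
  proof -
    define \<psi> where "\<psi> s = \<phi> (xs + s *\<^sub>R v) - s *\<^sub>R D xs v - (s^2/2) *\<^sub>R B v v" for s :: real
    define w where "w s = D (xs + s *\<^sub>R v) v - D xs v - s *\<^sub>R B v v" for s :: real
    have inball: "xs + s *\<^sub>R v \<in> ball xs r" if "s \<in> {0..1}" for s
    proof -
      have "norm (s *\<^sub>R v) \<le> norm v" using that by (simp add: mult_left_le_one_le)
      thus ?thesis using v by (simp add: dist_norm \<delta>_def)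
    qed
    have der: "(\<psi> has_vector_derivative w s) (at s within {0..1})" if s: "s \<in> {0..1}" for s
    proof -
      have 1: "((\<lambda>s. xs + s *\<^sub>R v) has_vector_derivative v) (at s within {0..1})"
        by (auto intro!: derivative_eq_intros)
      have 2: "(\<phi> has_derivative D (xs + s *\<^sub>R v)) (at ((\<lambda>s. xs + s *\<^sub>R v) s) within (\<lambda>s. xs + s *\<^sub>R v) ` {0..1})"
        using D[OF inball[OF s]] by (auto intro: has_derivative_at_withinI)
      have 3: "((\<lambda>s. \<phi> (xs + s *\<^sub>R v)) has_vector_derivative D (xs + s *\<^sub>R v) v) (at s within {0..1})"
        using vector_derivative_diff_chain_within[OF 1 2] by (simp add: o_def)
      have 4: "((\<lambda>s. s *\<^sub>R D xs v) has_vector_derivative D xs v) (at s within {0..1})"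
        by (auto intro!: derivative_eq_intros)
      have 5: "((\<lambda>s. (s^2/2) *\<^sub>R B v v) has_vector_derivative s *\<^sub>R B v v) (at s within {0..1})"
        unfolding has_vector_derivative_def
        by (auto intro!: derivative_eq_intros simp: algebra_simps power2_eq_square)
      show ?thesis unfolding \<psi>_def w_def
        by (intro has_vector_derivative_diff 3 4 5)
    qed
    have w0: "w 0 = 0" using Bh[of 0] by (simp add: w_def)
    have wb: "norm (w s - w 0) \<le> \<epsilon> * (norm v)^2" if s: "s \<in> {0..1}" for s
    proof -
      have ns: "norm (s *\<^sub>R v) \<le> norm v" using s by (simp add: mult_left_le_one_le)
      have "w s = D (xs + s *\<^sub>R v) v - D xs v - B (s *\<^sub>R v) v" by (simp add: w_def Bh)
      hence "norm (w s) \<le> \<epsilon> * norm (s *\<^sub>R v) * norm v"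
        using \<delta>0(2)[of "s *\<^sub>R v" v] ns v by (simp add: \<delta>_def)
      also have "\<dots> \<le> \<epsilon> * norm v * norm v" using ns eps by (intro mult_right_mono mult_left_mono) auto
      finally show ?thesis using w0 by (simp add: power2_eq_square mult.assoc)
    qed
    have "norm (\<psi> 1 - \<psi> 0 - (1 - 0) *\<^sub>R w 0) \<le> norm (1 - 0::real) * (\<epsilon> * (norm v)^2)"
    proof (rule vector_differentiable_bound_linearization)
      show "\<And>s. s \<in> {0..1::real} \<Longrightarrow> (\<psi> has_vector_derivative w s) (at s within {0..1})" by (rule der)
      show "closed_segment 0 1 \<subseteq> {0..1::real}" by (simp add: closed_segment_eq_real_ivl)
      show "\<And>s. s \<in> {0..1::real} \<Longrightarrow> norm (w s - w 0) \<le> \<epsilon> * (norm v)^2" by (rule wb)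
      show "(0::real) \<in> {0..1}" by simp
    qed
    thus ?thesis using w0 by (simp add: \<psi>_def algebra_simps)
  qed
  thus ?thesis using \<delta> by blast
qed

lemma taylor_seq:
  fixes \<phi> :: "'a::real_normed_vector \<Rightarrow> 'c::real_normed_vector"
  assumes D0: "bounded_linear D0" and B: "bounded_bilinear B"
    and tay: "\<And>\<epsilon>. \<epsilon> > 0 \<Longrightarrow> \<exists>\<delta>>0. \<forall>v. norm v < \<delta> \<longrightarrow> norm (\<phi> (xs + v) - \<phi> xs - D0 v - (1/2) *\<^sub>R B v v) \<le> \<epsilon> * (norm v)^2"
    and T: "\<And>n. T n > 0" "T \<longlonglongrightarrow> 0" and e: "(\<lambda>n. e n /\<^sub>R (T n)^2) \<longlonglongrightarrow> 0"
  shows "(\<lambda>n. (\<phi> (xs + (T n *\<^sub>R h + ((T n)^2/2) *\<^sub>R d + e n)) - \<phi> xs - T n *\<^sub>R D0 h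
            - ((T n)^2/2) *\<^sub>R (D0 d + B h h)) /\<^sub>R (T n)^2) \<longlonglongrightarrow> 0"
proof -
  interpret D0: bounded_linear D0 by (rule D0)
  interpret B: bounded_bilinear B by (rule B)
  define a where "a n = (T n / 2) *\<^sub>R d + T n *\<^sub>R (e n /\<^sub>R (T n)^2)" for n
  define v where "v n = T n *\<^sub>R h + ((T n)^2/2) *\<^sub>R d + e n" for n
  define R where "R n = \<phi> (xs + v n) - \<phi> xs - D0 (v n) - (1/2) *\<^sub>R B (v n) (v n)" for n
  have a0: "a \<longlonglongrightarrow> 0"
  proof -
    have "(\<lambda>n. (T n / 2) *\<^sub>R d + T n *\<^sub>R (e n /\<^sub>R (T n)^2)) \<longlonglongrightarrow> (0 / 2) *\<^sub>R d + 0 *\<^sub>R 0"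
      by (intro tendsto_intros T e) simp
    thus ?thesis unfolding a_def[abs_def] by simp
  qed
  have vrep: "v n = T n *\<^sub>R (h + a n)" for n
  proof -
    have "T n \<noteq> 0" using T(1)[of n] by simp
    thus ?thesis by (simp add: v_def a_def algebra_simps power2_eq_square field_simps)
  qed
  have v0: "v \<longlonglongrightarrow> 0"
  proof -
    have "(\<lambda>n. T n *\<^sub>R (h + a n)) \<longlonglongrightarrow> 0 *\<^sub>R (h + 0)" by (intro tendsto_intros T a0)
    moreover have "v = (\<lambda>n. T n *\<^sub>R (h + a n))" using vrep by (rule ext)
    ultimately show ?thesis by simp
  qed
  have iden: "(\<phi> (xs + (T n *\<^sub>R h + ((T n)^2/2) *\<^sub>R d + e n)) - \<phi> xs - T n *\<^sub>R D0 h
            - ((T n)^2/2) *\<^sub>R (D0 d + B h h)) /\<^sub>R (T n)^2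
     = R n /\<^sub>R (T n)^2 + D0 (e n /\<^sub>R (T n)^2) + (1/2) *\<^sub>R (B (a n) (h + a n) + B h (a n))" for n
  proof -
    have Tn: "T n \<noteq> 0" using T(1)[of n] by simp
    have 1: "D0 (v n) = T n *\<^sub>R D0 h + ((T n)^2/2) *\<^sub>R D0 d + D0 (e n)"
      by (simp add: v_def D0.add D0.scaleR)
    have 2: "B (v n) (v n) = (T n)^2 *\<^sub>R (B h h + B (a n) (h + a n) + B h (a n))"
      unfolding vrep by (simp add: B.scaleR_left B.scaleR_right B.add_left B.add_right algebra_simps power2_eq_square)
    have "\<phi> (xs + (T n *\<^sub>R h + ((T n)^2/2) *\<^sub>R d + e n)) - \<phi> xs - T n *\<^sub>R D0 h - ((T n)^2/2) *\<^sub>R (D0 d + B h h)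
       = R n + D0 (e n) + ((T n)^2/2) *\<^sub>R (B (a n) (h + a n) + B h (a n))"
      unfolding R_def 1 2 by (simp add: v_def algebra_simps)
    also have "\<dots> /\<^sub>R (T n)^2 = R n /\<^sub>R (T n)^2 + D0 (e n /\<^sub>R (T n)^2) + (1/2) *\<^sub>R (B (a n) (h + a n) + B h (a n))"
      using Tn by (simp add: D0.scaleR scaleR_add_right)
    finally show ?thesis .
  qed
  have R0: "(\<lambda>n. R n /\<^sub>R (T n)^2) \<longlonglongrightarrow> 0"
    unfolding tendsto_iff
  proof (intro allI impI)
    fix \<epsilon> :: real assume \<epsilon>: "\<epsilon> > 0"
    define C where "C = (norm h + 1)^2"
    have C: "C > 0" using norm_ge_zero[of h] unfolding C_def by (intro zero_less_power) linarith
    obtain \<delta> where \<delta>: "\<delta> > 0" "\<And>v. norm v < \<delta> \<Longrightarrow> norm (\<phi> (xs + v) - \<phi> xs - D0 v - (1/2) *\<^sub>R B v v) \<le> (\<epsilon> / (2 * C)) * (norm v)^2"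
      using tay[of "\<epsilon> / (2 * C)"] \<epsilon> C by auto
    have nv: "(\<lambda>n. norm (v n)) \<longlonglongrightarrow> 0" using tendsto_norm[OF v0] by simp
    have ev1: "\<forall>\<^sub>F n in sequentially. norm (v n) < \<delta>" using nv \<delta>(1) by (rule order_tendstoD(2))
    have na: "(\<lambda>n. norm (a n)) \<longlonglongrightarrow> 0" using tendsto_norm[OF a0] by simp
    have ev2: "\<forall>\<^sub>F n in sequentially. norm (a n) < 1" using na by (rule order_tendstoD(2)) simp
    show "\<forall>\<^sub>F n in sequentially. dist (R n /\<^sub>R (T n)^2) 0 < \<epsilon>"
      using ev1 ev2
    proof eventually_elim
      case (elim n)
      have Tn: "T n > 0" by (rule T(1))
      have "norm (v n) \<le> T n * (norm h + 1)"
      proof -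
        have "norm (h + a n) \<le> norm h + 1" using elim(2) norm_triangle_ineq[of h "a n"] by linarith
        thus ?thesis unfolding vrep using Tn by (simp add: mult_left_mono)
      qed
      hence nv2: "(norm (v n))^2 \<le> (T n)^2 * C"
        unfolding C_def by (metis norm_ge_zero power_mono power_mult_distrib)
      have "norm (R n) \<le> (\<epsilon> / (2 * C)) * (norm (v n))^2" unfolding R_def using \<delta>(2)[OF elim(1)] .
      also have "\<dots> \<le> (\<epsilon> / (2 * C)) * ((T n)^2 * C)" using nv2 \<epsilon> C by (intro mult_left_mono) auto
      also have "\<dots> = (T n)^2 * (\<epsilon> / 2)" using C by simp
      finally have "norm (R n) / (T n)^2 \<le> \<epsilon> / 2" using Tn by (simp add: divide_le_eq mult.commute)
      moreover have "dist (R n /\<^sub>R (T n)^2) 0 = norm (R n) / (T n)^2" using Tn by (simp add: dist_norm divide_inverse_commute)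
      ultimately show ?case using \<epsilon> by linarith
    qed
  qed
  have "(\<lambda>n. R n /\<^sub>R (T n)^2 + D0 (e n /\<^sub>R (T n)^2) + (1/2) *\<^sub>R (B (a n) (h + a n) + B h (a n)))
      \<longlonglongrightarrow> 0 + D0 0 + (1/2) *\<^sub>R (B 0 (h + 0) + B h 0)"
    by (intro tendsto_intros R0 e a0 D0.tendsto B.tendsto)
  thus ?thesis unfolding iden by (simp add: D0.zero B.zero_left B.zero_right)
qed

lemma convex_comb_exists:
  fixes g :: "nat \<Rightarrow> 'a::euclidean_space" and q :: "nat \<Rightarrow> real"
  assumes I: "finite I" "I \<noteq> {}"
    and H: "\<And>d t. t \<ge> 0 \<Longrightarrow> u \<bullet> d + t * \<tau> \<le> Max ((\<lambda>i. g i \<bullet> d + t * q i) ` I)"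
  shows "\<exists>\<alpha>. (\<forall>i\<in>I. \<alpha> i \<ge> 0) \<and> sum \<alpha> I = 1 \<and> (\<Sum>i\<in>I. \<alpha> i *\<^sub>R g i) = u \<and> \<tau> \<le> (\<Sum>i\<in>I. \<alpha> i * q i)"
proof -
  define W where "W = {\<alpha>::nat \<Rightarrow> real. (\<forall>i\<in>I. \<alpha> i \<ge> 0) \<and> sum \<alpha> I = 1}"
  define P where "P = (\<lambda>\<alpha>. ((\<Sum>i\<in>I. \<alpha> i *\<^sub>R g i), (\<Sum>i\<in>I. \<alpha> i * q i))) ` W"
  define pt where "pt i = (g i, q i)" for i
  have Pconv: "convex P"
    unfolding convex_def
  proof (intro ballI allI impI)
    fix x y and a b :: real assume x: "x \<in> P" and y: "y \<in> P" and ab: "0 \<le> a" "0 \<le> b" "a + b = 1"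
    obtain \<alpha> where \<alpha>: "\<alpha> \<in> W" "x = ((\<Sum>i\<in>I. \<alpha> i *\<^sub>R g i), (\<Sum>i\<in>I. \<alpha> i * q i))" using x unfolding P_def by blast
    obtain \<beta> where \<beta>: "\<beta> \<in> W" "y = ((\<Sum>i\<in>I. \<beta> i *\<^sub>R g i), (\<Sum>i\<in>I. \<beta> i * q i))" using y unfolding P_def by blast
    define \<gamma> where "\<gamma> i = a * \<alpha> i + b * \<beta> i" for i
    have "\<gamma> \<in> W" using \<alpha>(1) \<beta>(1) ab unfolding W_def \<gamma>_def
      by (auto simp: sum.distrib sum_distrib_left[symmetric])
    moreover have "a *\<^sub>R x + b *\<^sub>R y = ((\<Sum>i\<in>I. \<gamma> i *\<^sub>R g i), (\<Sum>i\<in>I. \<gamma> i * q i))"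
      unfolding \<alpha>(2) \<beta>(2) \<gamma>_def
      by (simp add: scaleR_sum_right sum_distrib_left sum.distrib algebra_simps scaleR_add_left)
    ultimately show "a *\<^sub>R x + b *\<^sub>R y \<in> P" unfolding P_def by blast
  qed
  have ind: "(\<lambda>j. if j = i then 1 else 0) \<in> W" if "i \<in> I" for i
    using that I unfolding W_def by (simp add: sum.delta)
  have ind_val: "(\<Sum>j\<in>I. (if j = i then 1 else 0) *\<^sub>R g j) = g i" "(\<Sum>j\<in>I. (if j = i then 1 else 0) * q j) = q i"
    if "i \<in> I" for i
  proof -
    have "(\<Sum>j\<in>I. (if j = i then 1 else 0) *\<^sub>R g j) = (\<Sum>j\<in>I. if j = i then g j else 0)" by (rule sum.cong) auto
    also have "\<dots> = g i" using that I by (simp add: sum.delta)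
    finally show "(\<Sum>j\<in>I. (if j = i then 1 else 0) *\<^sub>R g j) = g i" .
    have "(\<Sum>j\<in>I. (if j = i then 1 else 0) * q j) = (\<Sum>j\<in>I. if j = i then q j else 0)" by (rule sum.cong) auto
    also have "\<dots> = q i" using that I by (simp add: sum.delta)
    finally show "(\<Sum>j\<in>I. (if j = i then 1 else 0) * q j) = q i" .
  qed
  have "P = convex hull (pt ` I)"
  proof
    show "convex hull (pt ` I) \<subseteq> P"
    proof (rule hull_minimal)
      show "pt ` I \<subseteq> P"
      proof
        fix z assume "z \<in> pt ` I"
        then obtain i where i: "i \<in> I" "z = pt i" by blast
        show "z \<in> P" unfolding P_def using ind[OF i(1)] ind_val[OF i(1)] i(2)
          by (intro image_eqI[of _ _ "\<lambda>j. if j = i then 1 else 0"]) (auto simp: pt_def)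
      qed
    qed (rule Pconv)
  next
    show "P \<subseteq> convex hull (pt ` I)"
    proof
      fix z assume "z \<in> P"
      then obtain \<alpha> where \<alpha>: "\<alpha> \<in> W" "z = ((\<Sum>i\<in>I. \<alpha> i *\<^sub>R g i), (\<Sum>i\<in>I. \<alpha> i * q i))" unfolding P_def by blast
      have "z = (\<Sum>i\<in>I. \<alpha> i *\<^sub>R pt i)" unfolding \<alpha>(2) pt_def
        by (simp add: prod_eq_iff fst_sum snd_sum)
      also have "\<dots> \<in> convex hull (pt ` I)"
        using \<alpha>(1) I unfolding W_def by (intro convex_sum convex_convex_hull) (auto intro: hull_inc)
      finally show "z \<in> convex hull (pt ` I)" .
    qed
  qed
  hence Pcomp: "compact P" using I by (simp add: finite_imp_compact_convex_hull)
  define N where "N = {0::'a} \<times> {..0::real}"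
  have Ncl: "closed N" unfolding N_def by (intro closed_Times) auto
  have Nconv: "convex N" unfolding N_def by (intro convex_Times) auto
  define S where "S = (\<Union>x\<in> N. \<Union>y \<in> P. {x + y})"
  have Scl: "closed S" unfolding S_def by (rule closed_compact_sums[OF Ncl Pcomp])
  have Sconv: "convex S" unfolding S_def by (rule convex_sums[OF Nconv Pconv])
  have "(u, \<tau>) \<in> S"
  proof (rule ccontr)
    assume nz: "(u, \<tau>) \<notin> S"
    obtain a b where ab: "a \<bullet> (u, \<tau>) < b" "\<And>x. x \<in> S \<Longrightarrow> b < a \<bullet> x"
      using separating_hyperplane_closed_point[OF Sconv Scl nz] by blast
    obtain a1 a2 where a: "a = (a1, a2)" by (cases a)
    obtain i0 where i0: "i0 \<in> I" using I by blast
    have memS: "((0::'a), - r) + (g i, q i) \<in> S" if "r \<ge> 0" "i \<in> I" for r i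
    proof -
      have "(g i, q i) \<in> P" unfolding P_def using ind[OF that(2)] ind_val[OF that(2)]
        by (intro image_eqI[of _ _ "\<lambda>j. if j = i then 1 else 0"]) auto
      moreover have "((0::'a), - r) \<in> N" using that unfolding N_def by auto
      ultimately show ?thesis unfolding S_def by blast
    qed
    have val: "b < a1 \<bullet> g i + a2 * q i - a2 * r" if "r \<ge> 0" "i \<in> I" for r i
      using ab(2)[OF memS[OF that]] unfolding a by (simp add: algebra_simps)
    have a2: "a2 \<le> 0"
    proof (rule ccontr)
      assume "\<not> a2 \<le> 0" hence a2p: "a2 > 0" by simp
      define r where "r = (a1 \<bullet> g i0 + a2 * q i0 - b) / a2"
      have "b < a1 \<bullet> g i0 + a2 * q i0" using val[OF _ i0, of 0] by simp
      hence r0: "r \<ge> 0" using a2p unfolding r_def by simp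
      have "a2 * r = a1 \<bullet> g i0 + a2 * q i0 - b" using a2p unfolding r_def by simp
      thus False using val[OF r0 i0] by simp
    qed
    define d where "d = - a1"
    define t where "t = - a2"
    have t0: "t \<ge> 0" using a2 unfolding t_def by simp
    define Mx where "Mx = Max ((\<lambda>i. g i \<bullet> d + t * q i) ` I)"
    have "Mx \<in> (\<lambda>i. g i \<bullet> d + t * q i) ` I" unfolding Mx_def using I by (intro Max_in) auto
    then obtain i1 where i1: "i1 \<in> I" "Mx = g i1 \<bullet> d + t * q i1" by blast
    have "b < a1 \<bullet> g i1 + a2 * q i1" using val[OF _ i1(1), of 0] by simp
    hence "Mx < - b" unfolding i1(2) d_def t_def by (simp add: inner_commute)
    moreover have "- b < u \<bullet> d + t * \<tau>" using ab(1) unfolding a d_def t_def by (simp add: inner_commute)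
    moreover have "u \<bullet> d + t * \<tau> \<le> Mx" unfolding Mx_def by (rule H[OF t0])
    ultimately show False by linarith
  qed
  then obtain x y where xy: "x \<in> N" "y \<in> P" "(u, \<tau>) = x + y" unfolding S_def by blast
  obtain r where r: "x = (0, r)" "r \<le> 0" using xy(1) unfolding N_def by auto
  obtain \<alpha> where \<alpha>: "\<alpha> \<in> W" "y = ((\<Sum>i\<in>I. \<alpha> i *\<^sub>R g i), (\<Sum>i\<in>I. \<alpha> i * q i))" using xy(2) unfolding P_def by blast
  have "u = (\<Sum>i\<in>I. \<alpha> i *\<^sub>R g i)" "\<tau> = r + (\<Sum>i\<in>I. \<alpha> i * q i)" using xy(3) unfolding r(1) \<alpha>(2) by simp_all
  thus ?thesis using \<alpha>(1) r(2) unfolding W_def by (intro exI[of _ \<alpha>]) auto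
qed

lemma tendsto_Max_finite:
  fixes g :: "nat \<Rightarrow> 'x \<Rightarrow> real"
  assumes "finite I" "I \<noteq> {}" "\<And>i. i \<in> I \<Longrightarrow> (g i \<longlongrightarrow> l i) F"
  shows "((\<lambda>x. Max ((\<lambda>i. g i x) ` I)) \<longlongrightarrow> Max (l ` I)) F"
  using assms
proof (induction I rule: finite_ne_induct)
  case (singleton i) thus ?case by simp
next
  case (insert i I)
  have "((\<lambda>x. max (g i x) (Max ((\<lambda>i. g i x) ` I))) \<longlongrightarrow> max (l i) (Max (l ` I))) F"
    using insert by (intro tendsto_max) auto
  thus ?case using insert by simp
qed

locale setting =
  fixes A :: "'a::euclidean_space set"
    and K :: "'b::banach set"
    and m :: nat
    and f :: "'a \<Rightarrow> nat \<Rightarrow> real"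
    and gradf :: "nat \<Rightarrow> 'a \<Rightarrow> 'a"
    and Hf :: "nat \<Rightarrow> 'a \<Rightarrow> 'a \<Rightarrow>\<^sub>L 'a"
    and G :: "'a \<Rightarrow> 'b"
    and DG :: "'a \<Rightarrow> 'a \<Rightarrow>\<^sub>L 'b"
    and D2G :: "'a \<Rightarrow> 'a \<Rightarrow>\<^sub>L 'a \<Rightarrow>\<^sub>L 'b"
    and xs :: 'a
    and lams :: "'b \<Rightarrow>\<^sub>L real"
    and h :: 'a
  assumes A_ne: "A \<noteq> {}" and A_closed: "closed A" and A_convex: "convex A"
    and K_ne: "K \<noteq> {}" and K_closed: "closed K" and K_convex: "convex K" and K_cone: "cone K"
    and m_pos: "m \<ge> 1"
    and f_diff: "\<And>i x. i \<in> {1..m} \<Longrightarrow> ((\<lambda>y. f y i) has_derivative (\<lambda>v. gradf i x \<bullet> v)) (at x)"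
    and G_diff: "\<And>x. (G has_derivative blinfun_apply (DG x)) (at x)"
    and DG_cont: "continuous_on UNIV DG"
    and C2_near: "\<exists>r>0.
        (\<forall>x\<in>ball xs r. (DG has_derivative blinfun_apply (D2G x)) (at x)) \<and>
        continuous_on (ball xs r) D2G \<and>
        (\<forall>i\<in>{1..m}. (\<forall>x\<in>ball xs r. (gradf i has_derivative blinfun_apply (Hf i x)) (at x)) \<and>
           continuous_on (ball xs r) (Hf i))"
    and xs_int: "xs \<in> interior A"
    and xs_feas: "G xs \<in> K"
    and xs_locmin: "\<exists>\<epsilon>>0. \<forall>x\<in>A. G x \<in> K \<longrightarrow> dist x xs < \<epsilon> \<longrightarrow> maxfun f m xs \<le> maxfun f m x"
    and RCQ: "0 \<in> interior {G xs + blinfun_apply (DG xs) (a - xs) - k | a k. a \<in> A \<and> k \<in> K}"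
    and lams_K: "lams \<in> polar_cone K"
    and Lambda_single: "{lam \<in> polar_cone K. blinfun_apply lam (G xs) = 0 \<and>
        (\<forall>v\<in>contingent_cone A xs.
           dir_deriv (\<lambda>x. maxfun f m x + blinfun_apply lam (G x)) xs v \<ge> 0)} = {lams}"
    and h_crit: "h \<in> contingent_cone A xs"
      "blinfun_apply (DG xs) h \<in> contingent_cone K (G xs)"
      "Max ((\<lambda>i. gradf i xs \<bullet> h) ` active_set f m xs) \<le> 0"
begin

abbreviation "act \<equiv> active_set f m xs"
abbreviation "F \<equiv> maxfun f m"

lemma act_sub: "act \<subseteq> {1..m}" unfolding active_set_def by auto
lemma fin_act: "finite act" using act_sub finite_subset by blast
lemma F_ge: "i \<in> {1..m} \<Longrightarrow> f x i \<le> F x" unfolding maxfun_def by (intro Max_ge) auto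
lemma F_in: "\<exists>i\<in>{1..m}. F x = f x i"
proof -
  have "{1..m} \<noteq> {}" using m_pos by simp
  hence "F x \<in> (\<lambda>i. f x i) ` {1..m}" unfolding maxfun_def by (intro Max_in) auto
  thus ?thesis by auto
qed
lemma F_less: "(\<And>i. i \<in> {1..m} \<Longrightarrow> f x i < c) \<Longrightarrow> F x < c"
  using F_in by metis
lemma act_ne: "act \<noteq> {}" using F_in[of xs] unfolding active_set_def by auto
lemma act_F: "i \<in> act \<Longrightarrow> f xs i = F xs" unfolding active_set_def by auto
lemma inact_less: "i \<in> {1..m} \<Longrightarrow> i \<notin> act \<Longrightarrow> f xs i < F xs"
  using F_ge[of i xs] unfolding active_set_def by auto
lemma grad_h_le: "i \<in> act \<Longrightarrow> gradf i xs \<bullet> h \<le> 0"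
  using h_crit(3) fin_act act_ne by (meson Max_ge finite_imageI image_eqI order_trans)

lemma f_cont: "i \<in> {1..m} \<Longrightarrow> isCont (\<lambda>y. f y i) x"
  using f_diff has_derivative_continuous by blast

lemma dir_deriv_formula:
  "dir_deriv (\<lambda>x. F x + blinfun_apply lam (G x)) xs v
     = Max ((\<lambda>i. gradf i xs \<bullet> v) ` act) + blinfun_apply lam (blinfun_apply (DG xs) v)"
proof -
  let ?M = "\<lambda>t::real. Max ((\<lambda>i. f (xs + t *\<^sub>R v) i) ` act)"
  have line: "((\<lambda>t::real. xs + t *\<^sub>R v) \<longlongrightarrow> xs) (at_right 0)"
    by (rule tendsto_eq_intros) (auto intro!: tendsto_eq_intros)
  have fi: "((\<lambda>t. f (xs + t *\<^sub>R v) i) \<longlongrightarrow> f xs i) (at_right 0)" if "i \<in> {1..m}" for i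
    using isCont_tendsto_compose[OF f_cont[OF that] line] .
  have Mlim: "(?M \<longlongrightarrow> F xs) (at_right 0)"
  proof -
    have "(?M \<longlongrightarrow> Max ((\<lambda>i. f xs i) ` act)) (at_right 0)"
      using fin_act act_ne act_sub fi by (intro tendsto_Max_finite) auto
    moreover have "Max ((\<lambda>i. f xs i) ` act) = F xs" using act_F act_ne fin_act by (simp add: image_constant_conv cong: image_cong)
    ultimately show ?thesis by simp
  qed
  have evF: "\<forall>\<^sub>F t in at_right 0. F (xs + t *\<^sub>R v) = ?M t"
  proof -
    have "\<forall>\<^sub>F t in at_right 0. \<forall>i\<in>{1..m} - act. f (xs + t *\<^sub>R v) i < ?M t"
    proof (rule eventually_ball_finite)
      show "finite ({1..m} - act)" by simp
      show "\<forall>i\<in>{1..m} - act. \<forall>\<^sub>F t in at_right 0. f (xs + t *\<^sub>R v) i < ?M t"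
      proof
        fix i assume i: "i \<in> {1..m} - act"
        define c where "c = (f xs i + F xs) / 2"
        have lt: "f xs i < F xs" using i inact_less by auto
        have "\<forall>\<^sub>F t in at_right 0. f (xs + t *\<^sub>R v) i < c"
          using fi[of i] i lt by (intro order_tendstoD(2)) (auto simp: c_def)
        moreover have "\<forall>\<^sub>F t in at_right 0. c < ?M t"
          using Mlim lt by (intro order_tendstoD(1)) (auto simp: c_def)
        ultimately show "\<forall>\<^sub>F t in at_right 0. f (xs + t *\<^sub>R v) i < ?M t"
          by eventually_elim simp
      qed
    qed
    thus ?thesis
    proof eventually_elim
      case (elim t)
      have le: "F (xs + t *\<^sub>R v) \<le> ?M t"
        unfolding maxfun_def
      proof (rule Max.boundedI)
        show "finite ((\<lambda>i. f (xs + t *\<^sub>R v) i) ` {1..m})" by simp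
        show "(\<lambda>i. f (xs + t *\<^sub>R v) i) ` {1..m} \<noteq> {}" using m_pos by simp
        fix y assume "y \<in> (\<lambda>i. f (xs + t *\<^sub>R v) i) ` {1..m}"
        then obtain i where i: "i \<in> {1..m}" "y = f (xs + t *\<^sub>R v) i" by blast
        show "y \<le> ?M t"
        proof (cases "i \<in> act")
          case True thus ?thesis using i fin_act by (intro Max_ge) auto
        next
          case False hence "i \<in> {1..m} - act" using i by simp
          hence "f (xs + t *\<^sub>R v) i < ?M t" using elim by blast
          thus ?thesis using i by simp
        qed
      qed
      have "?M t \<le> F (xs + t *\<^sub>R v)"
        using fin_act act_ne act_sub F_ge by (intro Max.boundedI) auto
      thus ?case using le by simp
    qed
  qed
  have i_lim: "((\<lambda>t. (f (xs + t *\<^sub>R v) i - f xs i) / t) \<longlongrightarrow> gradf i xs \<bullet> v) (at_right 0)" if i: "i \<in> {1..m}" for i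
  proof -
    have "((\<lambda>t. f (xs + t *\<^sub>R v) i) has_derivative (\<lambda>t. gradf i xs \<bullet> (t *\<^sub>R v))) (at 0)"
    proof -
      have "((\<lambda>y. f y i) \<circ> (\<lambda>t. xs + t *\<^sub>R v) has_derivative (\<lambda>w. gradf i xs \<bullet> w) \<circ> (\<lambda>t. t *\<^sub>R v)) (at 0)"
        using f_diff[OF i, of xs] by (intro diff_chain_at) (auto intro!: derivative_eq_intros)
      thus ?thesis by (simp add: o_def)
    qed
    hence "((\<lambda>t. f (xs + t *\<^sub>R v) i) has_derivative (\<lambda>t. (gradf i xs \<bullet> v) * t)) (at 0)"
      by (simp add: mult.commute inner_scaleR_right)
    hence "((\<lambda>t. f (xs + t *\<^sub>R v) i) has_derivative (\<lambda>t. (gradf i xs \<bullet> v) * t)) (at 0 within {0<..})"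
      by (rule has_derivative_at_withinI)
    hence "((\<lambda>t. f (xs + t *\<^sub>R v) i) has_field_derivative gradf i xs \<bullet> v) (at 0 within {0<..})"
      unfolding has_field_derivative_def .
    thus ?thesis unfolding has_field_derivative_iff by simp
  qed
  have G_lim: "((\<lambda>t. (blinfun_apply lam (G (xs + t *\<^sub>R v)) - blinfun_apply lam (G xs)) / t)
      \<longlongrightarrow> blinfun_apply lam (blinfun_apply (DG xs) v)) (at_right 0)"
  proof -
    have "((\<lambda>t. blinfun_apply lam (G (xs + t *\<^sub>R v))) has_derivative (\<lambda>t. blinfun_apply lam (blinfun_apply (DG xs) (t *\<^sub>R v)))) (at 0)"
    proof -
      have "(blinfun_apply lam \<circ> G \<circ> (\<lambda>t. xs + t *\<^sub>R v) has_derivative blinfun_apply lam \<circ> blinfun_apply (DG xs) \<circ> (\<lambda>t. t *\<^sub>R v)) (at 0)"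
        using G_diff[of xs] by (intro diff_chain_at) (auto intro!: derivative_eq_intros)
      thus ?thesis by (simp add: o_def)
    qed
    hence "((\<lambda>t. blinfun_apply lam (G (xs + t *\<^sub>R v))) has_derivative (\<lambda>t. blinfun_apply lam (blinfun_apply (DG xs) v) * t)) (at 0)"
      by (simp add: mult.commute blinfun.scaleR_right)
    hence "((\<lambda>t. blinfun_apply lam (G (xs + t *\<^sub>R v))) has_derivative (\<lambda>t. blinfun_apply lam (blinfun_apply (DG xs) v) * t)) (at 0 within {0<..})"
      by (rule has_derivative_at_withinI)
    hence "((\<lambda>t. blinfun_apply lam (G (xs + t *\<^sub>R v))) has_field_derivative blinfun_apply lam (blinfun_apply (DG xs) v)) (at 0 within {0<..})"
      unfolding has_field_derivative_def .
    thus ?thesis unfolding has_field_derivative_iff by simp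
  qed
  have Mq: "((\<lambda>t. (?M t - F xs) / t) \<longlongrightarrow> Max ((\<lambda>i. gradf i xs \<bullet> v) ` act)) (at_right 0)"
  proof -
    have "((\<lambda>t. Max ((\<lambda>i. (f (xs + t *\<^sub>R v) i - f xs i) / t) ` act)) \<longlongrightarrow> Max ((\<lambda>i. gradf i xs \<bullet> v) ` act)) (at_right 0)"
      using fin_act act_ne act_sub i_lim by (intro tendsto_Max_finite) auto
    moreover have "\<forall>\<^sub>F t in at_right 0. Max ((\<lambda>i. (f (xs + t *\<^sub>R v) i - f xs i) / t) ` act) = (?M t - F xs) / t"
    proof (rule eventually_at_right_less[THEN eventually_mono])
      fix t :: real assume t: "0 < t"
      have mono: "mono (\<lambda>y. (y - F xs) / t)" using t by (intro monoI) (simp add: divide_right_mono)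
      have "(?M t - F xs) / t = Max ((\<lambda>y. (y - F xs) / t) ` ((\<lambda>i. f (xs + t *\<^sub>R v) i) ` act))"
        using fin_act act_ne by (intro mono_Max_commute[OF mono]) auto
      also have "\<dots> = Max ((\<lambda>i. (f (xs + t *\<^sub>R v) i - f xs i) / t) ` act)"
        by (rule arg_cong[where f=Max]) (auto simp: image_image act_F)
      finally show "Max ((\<lambda>i. (f (xs + t *\<^sub>R v) i - f xs i) / t) ` act) = (?M t - F xs) / t" by simp
    qed
    ultimately show ?thesis by (rule Lim_transform_eventually)
  qed
  have "((\<lambda>t. ((F (xs + t *\<^sub>R v) + blinfun_apply lam (G (xs + t *\<^sub>R v))) - (F xs + blinfun_apply lam (G xs))) / t)
      \<longlongrightarrow> Max ((\<lambda>i. gradf i xs \<bullet> v) ` act) + blinfun_apply lam (blinfun_apply (DG xs) v)) (at_right 0)"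
  proof -
    have "((\<lambda>t. (?M t - F xs) / t + (blinfun_apply lam (G (xs + t *\<^sub>R v)) - blinfun_apply lam (G xs)) / t)
      \<longlongrightarrow> Max ((\<lambda>i. gradf i xs \<bullet> v) ` act) + blinfun_apply lam (blinfun_apply (DG xs) v)) (at_right 0)"
      by (intro tendsto_add Mq G_lim)
    moreover have "\<forall>\<^sub>F t in at_right 0. (?M t - F xs) / t + (blinfun_apply lam (G (xs + t *\<^sub>R v)) - blinfun_apply lam (G xs)) / t
        = ((F (xs + t *\<^sub>R v) + blinfun_apply lam (G (xs + t *\<^sub>R v))) - (F xs + blinfun_apply lam (G xs))) / t"
      using evF by eventually_elim (simp add: diff_divide_distrib add_divide_distrib)
    ultimately show ?thesis by (rule Lim_transform_eventually)
  qed
  thus ?thesis unfolding dir_deriv_def by (intro tendsto_Lim) auto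
qed

end

context setting begin

abbreviation "L \<equiv> DG xs"
abbreviation "y0 \<equiv> G xs"
definition "qq i = h \<bullet> blinfun_apply (Hf i xs) h"
abbreviation "QQ \<equiv> blinfun_apply (blinfun_apply (D2G xs) h) h"

lemma open_inst:
  "\<exists>M>0. \<forall>y. \<exists>e k s. y = blinfun_apply L e - k + s *\<^sub>R y0 \<and> k \<in> K \<and> norm e \<le> M * norm y \<and> \<bar>s\<bar> \<le> M * norm y"
proof (rule openness[OF K_closed K_convex K_cone K_ne])
  have "{G xs + blinfun_apply (DG xs) (a - xs) - k | a k. a \<in> A \<and> k \<in> K} \<subseteq> {y0 + blinfun_apply L e - k | e k. k \<in> K}"
    by blast
  thus "0 \<in> interior {y0 + blinfun_apply L e - k | e k. k \<in> K}" using RCQ interior_mono by blast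
qed

lemma mr_inst:
  "\<exists>M>0. \<exists>\<rho>>0. \<forall>x z. norm (x - xs) < \<rho> \<longrightarrow> z \<in> K \<longrightarrow> norm (z - y0) < \<rho> \<longrightarrow> norm (G x - z) < \<rho> \<longrightarrow>
            (\<exists>x'. G x' \<in> K \<and> norm (x' - x) \<le> 2 * M * norm (G x - z))"
proof -
  obtain M where M: "M > 0" "\<forall>y. \<exists>e k s. y = blinfun_apply L e - k + s *\<^sub>R y0 \<and> k \<in> K \<and> norm e \<le> M * norm y \<and> \<bar>s\<bar> \<le> M * norm y"
    using open_inst by blast
  have "continuous (at xs) DG" using DG_cont continuous_on_eq_continuous_at[of UNIV DG] by auto
  from metric_regularity[OF K_closed K_convex K_cone xs_feas G_diff this M(1,2)] M(1) show ?thesis by blast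
qed

lemma C2_G: "(DG has_derivative blinfun_apply (D2G xs)) (at xs)"
  using C2_near by (metis centre_in_ball)

lemma C2_f: "i \<in> {1..m} \<Longrightarrow> (gradf i has_derivative blinfun_apply (Hf i xs)) (at xs)"
  using C2_near by (metis centre_in_ball)

lemma tay_G: "\<epsilon> > 0 \<Longrightarrow> \<exists>\<delta>>0. \<forall>v. norm v < \<delta> \<longrightarrow>
   norm (G (xs + v) - G xs - blinfun_apply L v - (1/2) *\<^sub>R blinfun_apply (blinfun_apply (D2G xs) v) v) \<le> \<epsilon> * (norm v)^2"
proof (rule taylor2[where r=1 and D="\<lambda>x. blinfun_apply (DG x)" and B="\<lambda>u v. blinfun_apply (blinfun_apply (D2G xs) u) v"])
  show "\<And>x. x \<in> ball xs 1 \<Longrightarrow> (G has_derivative blinfun_apply (DG x)) (at x)" using G_diff by blast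
  show "\<And>s u v. blinfun_apply (blinfun_apply (D2G xs) (s *\<^sub>R u)) v = s *\<^sub>R blinfun_apply (blinfun_apply (D2G xs) u) v"
    by (simp add: blinfun.scaleR_right blinfun.scaleR_left)
  fix \<epsilon>' :: real assume e: "\<epsilon>' > 0"
  obtain d where d: "d > 0" "\<And>y. norm (y - xs) < d \<Longrightarrow> norm (DG y - DG xs - blinfun_apply (D2G xs) (y - xs)) \<le> \<epsilon>' * norm (y - xs)"
    using C2_G e unfolding has_derivative_at_alt by blast
  show "\<exists>\<delta>>0. \<forall>u v. norm u < \<delta> \<longrightarrow> norm (blinfun_apply (DG (xs + u)) v - blinfun_apply (DG xs) v - blinfun_apply (blinfun_apply (D2G xs) u) v) \<le> \<epsilon>' * norm u * norm v"
  proof (intro exI[of _ d] conjI allI impI d(1))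
    fix u v :: 'a assume u: "norm u < d"
    have "norm (blinfun_apply (DG (xs + u)) v - blinfun_apply (DG xs) v - blinfun_apply (blinfun_apply (D2G xs) u) v)
        = norm (blinfun_apply (DG (xs + u) - DG xs - blinfun_apply (D2G xs) u) v)" by (simp add: blinfun.diff_left)
    also have "\<dots> \<le> norm (DG (xs + u) - DG xs - blinfun_apply (D2G xs) u) * norm v" by (rule norm_blinfun)
    also have "\<dots> \<le> \<epsilon>' * norm u * norm v" using d(2)[of "xs + u"] u by (simp add: mult_right_mono)
    finally show "norm (blinfun_apply (DG (xs + u)) v - blinfun_apply (DG xs) v - blinfun_apply (blinfun_apply (D2G xs) u) v) \<le> \<epsilon>' * norm u * norm v" .
  qed
qed simp

lemma tay_f: "i \<in> {1..m} \<Longrightarrow> \<epsilon> > 0 \<Longrightarrow> \<exists>\<delta>>0. \<forall>v. norm v < \<delta> \<longrightarrow>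
   norm (f (xs + v) i - f xs i - gradf i xs \<bullet> v - (1/2) *\<^sub>R (blinfun_apply (Hf i xs) v \<bullet> v)) \<le> \<epsilon> * (norm v)^2"
proof (rule taylor2[where \<phi>="\<lambda>y. f y i" and r=1 and D="\<lambda>x v. gradf i x \<bullet> v" and B="\<lambda>u v. blinfun_apply (Hf i xs) u \<bullet> v"])
  assume i: "i \<in> {1..m}"
  show "\<And>x. x \<in> ball xs 1 \<Longrightarrow> ((\<lambda>y. f y i) has_derivative (\<lambda>v. gradf i x \<bullet> v)) (at x)" using f_diff[OF i] by blast
  show "\<And>s u v. blinfun_apply (Hf i xs) (s *\<^sub>R u) \<bullet> v = s *\<^sub>R (blinfun_apply (Hf i xs) u \<bullet> v)"
    by (simp add: blinfun.scaleR_right)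
  fix \<epsilon>' :: real assume e: "\<epsilon>' > 0"
  obtain d where d: "d > 0" "\<And>y. norm (y - xs) < d \<Longrightarrow> norm (gradf i y - gradf i xs - blinfun_apply (Hf i xs) (y - xs)) \<le> \<epsilon>' * norm (y - xs)"
    using C2_f[OF i] e unfolding has_derivative_at_alt by blast
  show "\<exists>\<delta>>0. \<forall>u v. norm u < \<delta> \<longrightarrow> norm (gradf i (xs + u) \<bullet> v - gradf i xs \<bullet> v - blinfun_apply (Hf i xs) u \<bullet> v) \<le> \<epsilon>' * norm u * norm v"
  proof (intro exI[of _ d] conjI allI impI d(1))
    fix u v :: 'a assume u: "norm u < d"
    have "norm (gradf i (xs + u) \<bullet> v - gradf i xs \<bullet> v - blinfun_apply (Hf i xs) u \<bullet> v)
        = \<bar>(gradf i (xs + u) - gradf i xs - blinfun_apply (Hf i xs) u) \<bullet> v\<bar>" by (simp add: inner_diff_left)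
    also have "\<dots> \<le> norm (gradf i (xs + u) - gradf i xs - blinfun_apply (Hf i xs) u) * norm v" by (rule Cauchy_Schwarz_ineq2)
    also have "\<dots> \<le> \<epsilon>' * norm u * norm v" using d(2)[of "xs + u"] u by (simp add: mult_right_mono)
    finally show "norm (gradf i (xs + u) \<bullet> v - gradf i xs \<bullet> v - blinfun_apply (Hf i xs) u \<bullet> v) \<le> \<epsilon>' * norm u * norm v" .
  qed
qed simp_all

lemma seq_G:
  assumes T: "\<And>n. T n > 0" "T \<longlonglongrightarrow> 0"
  shows "(\<lambda>n. (G (xs + (T n *\<^sub>R h + ((T n)^2/2) *\<^sub>R d + 0)) - G xs - T n *\<^sub>R blinfun_apply L h
            - ((T n)^2/2) *\<^sub>R (blinfun_apply L d + QQ)) /\<^sub>R (T n)^2) \<longlonglongrightarrow> 0"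
  by (rule taylor_seq[where B="\<lambda>u v. blinfun_apply (blinfun_apply (D2G xs) u) v"])
     (auto intro: tay_G T blinfun.bounded_linear_right bounded_bilinear.comp1[OF bounded_bilinear_blinfun_apply] simp: )

lemma seq_f:
  assumes i: "i \<in> {1..m}" and T: "\<And>n. T n > 0" "T \<longlonglongrightarrow> 0" and e: "(\<lambda>n. e n /\<^sub>R (T n)^2) \<longlonglongrightarrow> 0"
  shows "(\<lambda>n. (f (xs + (T n *\<^sub>R h + ((T n)^2/2) *\<^sub>R d + e n)) i - f xs i - T n *\<^sub>R (gradf i xs \<bullet> h)
            - ((T n)^2/2) *\<^sub>R (gradf i xs \<bullet> d + qq i)) /\<^sub>R (T n)^2) \<longlonglongrightarrow> 0"
proof -
  have "(\<lambda>n. (f (xs + (T n *\<^sub>R h + ((T n)^2/2) *\<^sub>R d + e n)) i - f xs i - T n *\<^sub>R (gradf i xs \<bullet> h)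
            - ((T n)^2/2) *\<^sub>R (gradf i xs \<bullet> d + blinfun_apply (Hf i xs) h \<bullet> h)) /\<^sub>R (T n)^2) \<longlonglongrightarrow> 0"
  proof (rule taylor_seq[of "\<lambda>v. gradf i xs \<bullet> v" "\<lambda>u v. blinfun_apply (Hf i xs) u \<bullet> v" "\<lambda>y. f y i"])
    show "bounded_linear (\<lambda>v. gradf i xs \<bullet> v)" by (rule bounded_linear_inner_right)
    show "bounded_bilinear (\<lambda>u v. blinfun_apply (Hf i xs) u \<bullet> v)"
      by (rule bounded_bilinear.comp1[OF bounded_bilinear_inner blinfun.bounded_linear_right])
    show "\<And>\<epsilon>. \<epsilon> > 0 \<Longrightarrow> \<exists>\<delta>>0. \<forall>v. norm v < \<delta> \<longrightarrow> norm (f (xs + v) i - f xs i - gradf i xs \<bullet> v - (1/2) *\<^sub>R (blinfun_apply (Hf i xs) v \<bullet> v)) \<le> \<epsilon> * (norm v)^2"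
      by (rule tay_f[OF i])
  qed (use T e in auto)
  thus ?thesis by (simp add: qq_def inner_commute)
qed

end

context setting begin

lemma tendsto_scaleR_sq:
  fixes X :: "nat \<Rightarrow> 'c::real_normed_vector"
  assumes "(\<lambda>n. X n /\<^sub>R (T n)^2) \<longlonglongrightarrow> 0" "T \<longlonglongrightarrow> 0" "\<And>n. T n > 0"
  shows "X \<longlonglongrightarrow> 0"
proof -
  have "(\<lambda>n. (T n)^2 *\<^sub>R (X n /\<^sub>R (T n)^2)) \<longlonglongrightarrow> 0^2 *\<^sub>R 0"
    by (intro tendsto_intros assms; simp)
  moreover have "(\<lambda>n. (T n)^2 *\<^sub>R (X n /\<^sub>R (T n)^2)) = X"
  proof (rule ext)
    fix n have "T n \<noteq> 0" using assms(3)[of n] by simp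
    thus "(T n)^2 *\<^sub>R (X n /\<^sub>R (T n)^2) = X n" by simp
  qed
  ultimately show ?thesis by simp
qed

lemma primal:
  assumes w: "w \<in> second_order_tangent_set K y0 (blinfun_apply L h)"
    and rep: "blinfun_apply L d + QQ - w = k + s *\<^sub>R y0" and k: "k \<in> K"
  shows "\<exists>i\<in>act. gradf i xs \<bullet> h = 0 \<and> gradf i xs \<bullet> d + qq i \<ge> 0"
proof (rule ccontr)
  assume neg: "\<not> ?thesis"
  hence neg': "\<And>i. i \<in> act \<Longrightarrow> gradf i xs \<bullet> h = 0 \<Longrightarrow> gradf i xs \<bullet> d + qq i < 0" by force
  obtain T where T: "\<And>n. T n > 0" "T \<longlonglongrightarrow> 0"
    and Tw: "(\<lambda>n. infdist (y0 + T n *\<^sub>R blinfun_apply L h + ((T n)^2 / 2) *\<^sub>R w) K / (T n)^2) \<longlonglongrightarrow> 0"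
    using w unfolding second_order_tangent_set_def by blast
  define yn where "yn n = y0 + T n *\<^sub>R blinfun_apply L h + ((T n)^2 / 2) *\<^sub>R w" for n
  have "\<exists>k'\<in>K. dist (yn n) k' < infdist (yn n) K + (T n)^3" for n
  proof -
    have "Inf ((\<lambda>a. dist (yn n) a) ` K) < infdist (yn n) K + (T n)^3"
      using T(1)[of n] infdist_notempty[OF K_ne, of "yn n"] by simp
    then obtain z where "z \<in> (\<lambda>a. dist (yn n) a) ` K" "z < infdist (yn n) K + (T n)^3"
      using K_ne by (meson cInf_lessD image_is_empty)
    thus ?thesis by blast
  qed
  then obtain kn where kn: "\<And>n. kn n \<in> K" "\<And>n. dist (yn n) (kn n) < infdist (yn n) K + (T n)^3" by metis
  have Tw': "(\<lambda>n. infdist (yn n) K / (T n)^2) \<longlonglongrightarrow> 0" using Tw unfolding yn_def .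
  have ykn: "(\<lambda>n. (yn n - kn n) /\<^sub>R (T n)^2) \<longlonglongrightarrow> 0"
  proof (rule Lim_null_comparison)
    show "\<forall>\<^sub>F n in sequentially. norm ((yn n - kn n) /\<^sub>R (T n)^2) \<le> infdist (yn n) K / (T n)^2 + T n"
    proof (intro always_eventually allI)
      fix n
      have Tn: "T n > 0" by (rule T(1))
      have "norm ((yn n - kn n) /\<^sub>R (T n)^2) = dist (yn n) (kn n) / (T n)^2" by (simp add: dist_norm divide_inverse_commute)
      also have "\<dots> \<le> (infdist (yn n) K + (T n)^3) / (T n)^2" using kn(2)[of n] Tn by (intro divide_right_mono) auto
      also have "\<dots> = infdist (yn n) K / (T n)^2 + T n" using Tn by (simp add: add_divide_distrib power2_eq_square power3_eq_cube)
      finally show "norm ((yn n - kn n) /\<^sub>R (T n)^2) \<le> infdist (yn n) K / (T n)^2 + T n" .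
    qed
    show "(\<lambda>n. infdist (yn n) K / (T n)^2 + T n) \<longlonglongrightarrow> 0" using tendsto_add[OF Tw' T(2)] by simp
  qed
  have yn0: "yn \<longlonglongrightarrow> y0"
  proof -
    have "(\<lambda>n. y0 + T n *\<^sub>R blinfun_apply L h + ((T n)^2 / 2) *\<^sub>R w) \<longlonglongrightarrow> y0 + 0 *\<^sub>R blinfun_apply L h + (0^2 / 2) *\<^sub>R w"
      by (intro tendsto_intros T(2); simp)
    thus ?thesis unfolding yn_def[abs_def] by simp
  qed
  have kn0: "kn \<longlonglongrightarrow> y0"
  proof -
    have "(\<lambda>n. yn n - kn n) \<longlonglongrightarrow> 0" by (rule tendsto_scaleR_sq[OF ykn T(2) T(1)])
    hence "(\<lambda>n. yn n - (yn n - kn n)) \<longlonglongrightarrow> y0 - 0" by (intro tendsto_diff yn0)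
    thus ?thesis by simp
  qed
  define xn where "xn n = xs + (T n *\<^sub>R h + ((T n)^2/2) *\<^sub>R d)" for n
  define zn where "zn n = (1 + s * (T n)^2 / 2) *\<^sub>R kn n + ((T n)^2/2) *\<^sub>R k" for n
  have zn0: "zn \<longlonglongrightarrow> y0"
  proof -
    have "(\<lambda>n. (1 + s * (T n)^2 / 2) *\<^sub>R kn n + ((T n)^2/2) *\<^sub>R k) \<longlonglongrightarrow> (1 + s * 0^2 / 2) *\<^sub>R y0 + (0^2/2) *\<^sub>R k"
      by (intro tendsto_intros T(2) kn0; simp)
    thus ?thesis unfolding zn_def[abs_def] by simp
  qed
  have zK: "\<forall>\<^sub>F n in sequentially. zn n \<in> K"
  proof -
    have "(\<lambda>n. 1 + s * (T n)^2 / 2) \<longlonglongrightarrow> 1 + s * 0^2 / 2" by (intro tendsto_intros T(2); simp)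
    hence "\<forall>\<^sub>F n in sequentially. 0 < 1 + s * (T n)^2 / 2" by (intro order_tendstoD(1)) auto
    thus ?thesis
    proof eventually_elim
      case (elim n)
      have "(1 + s * (T n)^2 / 2) *\<^sub>R kn n \<in> K" using K_cone kn(1)[of n] elim unfolding cone_def by auto
      moreover have "((T n)^2/2) *\<^sub>R k \<in> K" using K_cone k unfolding cone_def by auto
      ultimately show ?case unfolding zn_def by (rule cone_add[OF K_cone K_convex])
    qed
  qed
  have Gz: "(\<lambda>n. (G (xn n) - zn n) /\<^sub>R (T n)^2) \<longlonglongrightarrow> 0"
  proof -
    have SG: "(\<lambda>n. (G (xs + (T n *\<^sub>R h + ((T n)^2/2) *\<^sub>R d + 0)) - G xs - T n *\<^sub>R blinfun_apply L h
            - ((T n)^2/2) *\<^sub>R (blinfun_apply L d + QQ)) /\<^sub>R (T n)^2) \<longlonglongrightarrow> 0"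
      by (rule seq_G[OF T])
    have lim: "(\<lambda>n. (G (xs + (T n *\<^sub>R h + ((T n)^2/2) *\<^sub>R d + 0)) - G xs - T n *\<^sub>R blinfun_apply L h
            - ((T n)^2/2) *\<^sub>R (blinfun_apply L d + QQ)) /\<^sub>R (T n)^2 + (yn n - kn n) /\<^sub>R (T n)^2 + (s / 2) *\<^sub>R (y0 - kn n))
        \<longlonglongrightarrow> 0 + 0 + (s / 2) *\<^sub>R (y0 - y0)"
      by (intro tendsto_intros SG ykn kn0; simp)
    have eq: "(G (xs + (T n *\<^sub>R h + ((T n)^2/2) *\<^sub>R d + 0)) - G xs - T n *\<^sub>R blinfun_apply L h
            - ((T n)^2/2) *\<^sub>R (blinfun_apply L d + QQ)) /\<^sub>R (T n)^2 + (yn n - kn n) /\<^sub>R (T n)^2 + (s / 2) *\<^sub>R (y0 - kn n)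
          = (G (xn n) - zn n) /\<^sub>R (T n)^2" for n
    proof -
      have Tn: "T n \<noteq> 0" using T(1)[of n] by simp
      have LQ: "blinfun_apply L d + QQ = w + k + s *\<^sub>R y0" using rep by (simp add: algebra_simps)
      have "G (xn n) - zn n = (G (xs + (T n *\<^sub>R h + ((T n)^2/2) *\<^sub>R d + 0)) - G xs - T n *\<^sub>R blinfun_apply L h
            - ((T n)^2/2) *\<^sub>R (blinfun_apply L d + QQ)) + (yn n - kn n) + ((T n)^2 * s / 2) *\<^sub>R (y0 - kn n)"
        unfolding LQ by (simp add: xn_def zn_def yn_def algebra_simps)
      moreover have e2: "((T n)^2 * s / 2) *\<^sub>R (y0 - kn n) /\<^sub>R (T n)^2 = (s / 2) *\<^sub>R (y0 - kn n)"
        using Tn by (simp add: field_simps)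
      ultimately show ?thesis by (simp only: scaleR_add_right)
    qed
    show ?thesis using lim unfolding eq by simp
  qed
  have Gz0: "(\<lambda>n. G (xn n) - zn n) \<longlonglongrightarrow> 0" by (rule tendsto_scaleR_sq[OF Gz T(2) T(1)])
  have xn0: "xn \<longlonglongrightarrow> xs"
  proof -
    have "(\<lambda>n. xs + (T n *\<^sub>R h + ((T n)^2/2) *\<^sub>R d)) \<longlonglongrightarrow> xs + (0 *\<^sub>R h + (0^2/2) *\<^sub>R d)"
      by (intro tendsto_intros T(2); simp)
    thus ?thesis unfolding xn_def[abs_def] by simp
  qed
  obtain M \<rho> where M: "M > 0" "\<rho> > 0" and MR: "\<And>x z. norm (x - xs) < \<rho> \<Longrightarrow> z \<in> K \<Longrightarrow> norm (z - y0) < \<rho> \<Longrightarrow>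
      norm (G x - z) < \<rho> \<Longrightarrow> \<exists>x'. G x' \<in> K \<and> norm (x' - x) \<le> 2 * M * norm (G x - z)"
    using mr_inst by blast
  define P where "P n \<longleftrightarrow> norm (xn n - xs) < \<rho> \<and> zn n \<in> K \<and> norm (zn n - y0) < \<rho> \<and> norm (G (xn n) - zn n) < \<rho>" for n
  have evP: "\<forall>\<^sub>F n in sequentially. P n"
  proof -
    have a1: "(\<lambda>n. norm (xn n - xs)) \<longlonglongrightarrow> 0" using tendsto_norm[OF tendsto_diff[OF xn0 tendsto_const[of xs]]] by simp
    have a2: "(\<lambda>n. norm (zn n - y0)) \<longlonglongrightarrow> 0" using tendsto_norm[OF tendsto_diff[OF zn0 tendsto_const[of y0]]] by simp
    have a3: "(\<lambda>n. norm (G (xn n) - zn n)) \<longlonglongrightarrow> 0" using tendsto_norm[OF Gz0] by simp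
    have "\<forall>\<^sub>F n in sequentially. norm (xn n - xs) < \<rho>" using a1 M(2) by (rule order_tendstoD(2))
    moreover have "\<forall>\<^sub>F n in sequentially. norm (zn n - y0) < \<rho>" using a2 M(2) by (rule order_tendstoD(2))
    moreover have "\<forall>\<^sub>F n in sequentially. norm (G (xn n) - zn n) < \<rho>" using a3 M(2) by (rule order_tendstoD(2))
    ultimately show ?thesis using zK unfolding P_def by eventually_elim blast
  qed
  define x' where "x' n = (if P n then SOME x'. G x' \<in> K \<and> norm (x' - xn n) \<le> 2 * M * norm (G (xn n) - zn n) else xn n)" for n
  have x'_good: "G (x' n) \<in> K \<and> norm (x' n - xn n) \<le> 2 * M * norm (G (xn n) - zn n)" if "P n" for n
  proof -
    have "\<exists>x'. G x' \<in> K \<and> norm (x' - xn n) \<le> 2 * M * norm (G (xn n) - zn n)" using MR that unfolding P_def by blast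
    hence "G (SOME x'. G x' \<in> K \<and> norm (x' - xn n) \<le> 2 * M * norm (G (xn n) - zn n)) \<in> K \<and>
        norm ((SOME x'. G x' \<in> K \<and> norm (x' - xn n) \<le> 2 * M * norm (G (xn n) - zn n)) - xn n) \<le> 2 * M * norm (G (xn n) - zn n)"
      by (rule someI_ex)
    thus ?thesis using that unfolding x'_def by simp
  qed
  define en where "en n = x' n - xn n" for n
  have en: "(\<lambda>n. en n /\<^sub>R (T n)^2) \<longlonglongrightarrow> 0"
  proof (rule Lim_null_comparison)
    show "\<forall>\<^sub>F n in sequentially. norm (en n /\<^sub>R (T n)^2) \<le> 2 * M * norm ((G (xn n) - zn n) /\<^sub>R (T n)^2)"
      using evP
    proof eventually_elim
      case (elim n)
      have Tn: "T n > 0" by (rule T(1))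
      have "norm (en n) \<le> 2 * M * norm (G (xn n) - zn n)" using x'_good[OF elim] unfolding en_def by blast
      hence "norm (en n) / (T n)^2 \<le> 2 * M * norm (G (xn n) - zn n) / (T n)^2" using Tn by (intro divide_right_mono) auto
      thus ?case using Tn by (simp add: divide_inverse_commute)
    qed
    show "(\<lambda>n. 2 * M * norm ((G (xn n) - zn n) /\<^sub>R (T n)^2)) \<longlonglongrightarrow> 0"
      using tendsto_mult_right_zero[OF tendsto_norm_zero[OF Gz], of "2 * M"] by simp
  qed
  have x'rep: "x' n = xs + (T n *\<^sub>R h + ((T n)^2/2) *\<^sub>R d + en n)" for n by (simp add: en_def xn_def)
  have x'0: "x' \<longlonglongrightarrow> xs"
  proof -
    have "(\<lambda>n. xn n + en n) \<longlonglongrightarrow> xs + 0" by (intro tendsto_add xn0 tendsto_scaleR_sq[OF en T(2) T(1)])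
    moreover have "(\<lambda>n. xn n + en n) = x'" by (rule ext) (simp add: en_def)
    ultimately show ?thesis by simp
  qed
  obtain \<epsilon> where \<epsilon>: "\<epsilon> > 0" "\<And>x. x \<in> A \<Longrightarrow> G x \<in> K \<Longrightarrow> dist x xs < \<epsilon> \<Longrightarrow> F xs \<le> F x"
    using xs_locmin by blast
  obtain r where r: "r > 0" "ball xs r \<subseteq> A" using xs_int by (meson mem_interior)
  have evD: "\<forall>\<^sub>F n in sequentially. dist (x' n) xs < min \<epsilon> r"
    using x'0 \<epsilon>(1) r(1) by (intro tendstoD) auto
  have evF: "\<forall>\<^sub>F n in sequentially. F xs \<le> F (x' n)"
    using evP evD
  proof eventually_elim
    case (elim n)
    have "x' n \<in> A" using elim(2) r(2) by (auto simp: dist_commute)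
    thus ?case using \<epsilon>(2) x'_good[OF elim(1)] elim(2) by simp
  qed
  have evi: "\<forall>\<^sub>F n in sequentially. f (x' n) i < F xs" if i: "i \<in> {1..m}" for i
  proof (cases "i \<in> act")
    case False
    have "((\<lambda>n. f (x' n) i) \<longlongrightarrow> f xs i) sequentially" using isCont_tendsto_compose[OF f_cont[OF i] x'0] .
    thus ?thesis using inact_less[OF i False] by (rule order_tendstoD(2))
  next
    case True
    define a where "a = gradf i xs \<bullet> h"
    define c where "c = gradf i xs \<bullet> d + qq i"
    define \<Phi> where "\<Phi> n = (f (xs + (T n *\<^sub>R h + ((T n)^2/2) *\<^sub>R d + en n)) i - f xs i - T n *\<^sub>R (gradf i xs \<bullet> h)
            - ((T n)^2/2) *\<^sub>R (gradf i xs \<bullet> d + qq i)) /\<^sub>R (T n)^2" for n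
    have SF: "\<Phi> \<longlonglongrightarrow> 0" unfolding \<Phi>_def[abs_def] by (rule seq_f[OF i T en])
    have fi: "f xs i = F xs" using act_F[OF True] .
    have decomp: "f (x' n) i - F xs = (T n)^2 * \<Phi> n + T n * a + (T n)^2 * c / 2" for n
    proof -
      have Tn: "T n \<noteq> 0" using T(1)[of n] by simp
      thus ?thesis unfolding \<Phi>_def x'rep a_def c_def fi by (simp add: field_simps)
    qed
    have a: "a \<le> 0" using grad_h_le[OF True] unfolding a_def .
    show ?thesis
    proof (cases "a = 0")
      case True
      have c: "c < 0" using neg' \<open>i \<in> act\<close> True unfolding a_def c_def by blast
      have lim: "(\<lambda>n. \<Phi> n + c / 2) \<longlonglongrightarrow> 0 + c / 2" by (intro tendsto_intros SF; simp)
      have "\<forall>\<^sub>F n in sequentially. \<Phi> n + c / 2 < 0" using order_tendstoD(2)[OF lim, of 0] c by simp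
      thus ?thesis
      proof eventually_elim
        case (elim n)
        have Tn: "(T n)^2 > 0" using T(1)[of n] by simp
        have "f (x' n) i - F xs = (T n)^2 * (\<Phi> n + c / 2)" using decomp[of n] True by (simp add: algebra_simps)
        also have "\<dots> < 0" using Tn elim by (simp add: mult_pos_neg)
        finally show ?case by simp
      qed
    next
      case False
      hence an: "a < 0" using a by simp
      have "(\<lambda>n. T n * \<Phi> n + a + T n * c / 2) \<longlonglongrightarrow> 0 * 0 + a + 0 * c / 2" by (intro tendsto_intros SF T(2); simp)
      from order_tendstoD(2)[OF this, of 0] have "\<forall>\<^sub>F n in sequentially. T n * \<Phi> n + a + T n * c / 2 < 0" using an by simp
      thus ?thesis
      proof eventually_elim
        case (elim n)
        have Tn: "T n > 0" by (rule T(1))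
        have "f (x' n) i - F xs = T n * (T n * \<Phi> n + a + T n * c / 2)" using decomp[of n] by (simp add: algebra_simps power2_eq_square)
        also have "\<dots> < 0" using Tn elim by (simp add: mult_pos_neg)
        finally show ?case by simp
      qed
    qed
  qed
  have "\<forall>\<^sub>F n in sequentially. \<forall>i\<in>{1..m}. f (x' n) i < F xs"
    by (rule eventually_ball_finite) (use evi in auto)
  hence "\<forall>\<^sub>F n in sequentially. F (x' n) < F xs" by eventually_elim (rule F_less, blast)
  with evF have "\<forall>\<^sub>F n in sequentially. False" by eventually_elim simp
  thus False by (simp add: eventually_sequentially)
qed

end

context setting begin

definition "Mx d t = Max ((\<lambda>i. gradf i xs \<bullet> d + t * qq i) ` act)"

lemma Mx_ge: "i \<in> act \<Longrightarrow> gradf i xs \<bullet> d + t * qq i \<le> Mx d t"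
  unfolding Mx_def using fin_act by (intro Max_ge) auto

lemma Mx_in: "\<exists>i\<in>act. Mx d t = gradf i xs \<bullet> d + t * qq i"
proof -
  have "Mx d t \<in> (\<lambda>i. gradf i xs \<bullet> d + t * qq i) ` act" unfolding Mx_def using fin_act act_ne by (intro Max_in) auto
  thus ?thesis by auto
qed

lemma Mx_le: "(\<And>i. i \<in> act \<Longrightarrow> gradf i xs \<bullet> d + t * qq i \<le> c) \<Longrightarrow> Mx d t \<le> c"
  using Mx_in by metis

lemma Mx_sub: "Mx (d1 + d2) (t1 + t2) \<le> Mx d1 t1 + Mx d2 t2"
proof (rule Mx_le)
  fix i assume i: "i \<in> act"
  have "gradf i xs \<bullet> (d1 + d2) + (t1 + t2) * qq i = (gradf i xs \<bullet> d1 + t1 * qq i) + (gradf i xs \<bullet> d2 + t2 * qq i)"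
    by (simp add: inner_add_right algebra_simps)
  also have "\<dots> \<le> Mx d1 t1 + Mx d2 t2" using Mx_ge[OF i] by (intro add_mono)
  finally show "gradf i xs \<bullet> (d1 + d2) + (t1 + t2) * qq i \<le> Mx d1 t1 + Mx d2 t2" .
qed

lemma Mx_scale: assumes c: "c > 0" shows "Mx (c *\<^sub>R d) (c * t) = c * Mx d t"
proof (rule antisym)
  show "Mx (c *\<^sub>R d) (c * t) \<le> c * Mx d t"
  proof (rule Mx_le)
    fix i assume i: "i \<in> act"
    have "gradf i xs \<bullet> (c *\<^sub>R d) + c * t * qq i = c * (gradf i xs \<bullet> d + t * qq i)" by (simp add: algebra_simps)
    also have "\<dots> \<le> c * Mx d t" using Mx_ge[OF i] c by (intro mult_left_mono) auto
    finally show "gradf i xs \<bullet> (c *\<^sub>R d) + c * t * qq i \<le> c * Mx d t" .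
  qed
  obtain i where i: "i \<in> act" "Mx d t = gradf i xs \<bullet> d + t * qq i" using Mx_in by blast
  have "c * Mx d t = gradf i xs \<bullet> (c *\<^sub>R d) + c * t * qq i" using i(2) by (simp add: algebra_simps)
  also have "\<dots> \<le> Mx (c *\<^sub>R d) (c * t)" by (rule Mx_ge[OF i(1)])
  finally show "c * Mx d t \<le> Mx (c *\<^sub>R d) (c * t)" .
qed

lemma Mx_00: "Mx 0 0 = 0"
  using Mx_in[of 0 0] by auto

definition "Gn = (\<Sum>i\<in>act. norm (gradf i xs))"

lemma Gn_nonneg: "Gn \<ge> 0" unfolding Gn_def by (simp add: sum_nonneg)

lemma Mx_bound: "Mx d 0 \<le> Gn * norm d"
proof (rule Mx_le)
  fix i assume i: "i \<in> act"
  have "gradf i xs \<bullet> d \<le> norm (gradf i xs) * norm d" by (metis Cauchy_Schwarz_ineq2 abs_le_D1)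
  also have "\<dots> \<le> Gn * norm d" unfolding Gn_def
    by (intro mult_right_mono member_le_sum i fin_act) auto
  finally show "gradf i xs \<bullet> d + 0 * qq i \<le> Gn * norm d" by simp
qed

lemma pzero:
  assumes w: "w \<in> second_order_tangent_set K y0 (blinfun_apply L h)"
    and t: "t \<ge> 0" and k: "k \<in> K" and rep: "blinfun_apply L d + t *\<^sub>R (QQ - w) = k + s *\<^sub>R y0"
  shows "Mx d t \<ge> 0"
proof (cases "t > 0")
  case True
  have "blinfun_apply L ((1/t) *\<^sub>R d) + QQ - w = (1/t) *\<^sub>R (blinfun_apply L d + t *\<^sub>R (QQ - w))"
    using True by (simp add: blinfun.scaleR_right algebra_simps)
  also have "\<dots> = (1/t) *\<^sub>R k + (s / t) *\<^sub>R y0" unfolding rep by (simp add: algebra_simps)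
  finally have rep': "blinfun_apply L ((1/t) *\<^sub>R d) + QQ - w = (1/t) *\<^sub>R k + (s / t) *\<^sub>R y0" .
  have "(1/t) *\<^sub>R k \<in> K" using K_cone k True unfolding cone_def by auto
  from primal[OF w rep' this] obtain i where i: "i \<in> act" "gradf i xs \<bullet> ((1/t) *\<^sub>R d) + qq i \<ge> 0" by blast
  have "gradf i xs \<bullet> d + t * qq i = t * (gradf i xs \<bullet> ((1/t) *\<^sub>R d) + qq i)" using True by (simp add: algebra_simps)
  also have "\<dots> \<ge> 0" using i(2) True by simp
  finally show ?thesis using Mx_ge[OF i(1), of d t] by linarith
next
  case False
  hence t0: "t = 0" using t by simp
  show ?thesis
  proof (rule ccontr)
    assume "\<not> Mx d t \<ge> 0"
    hence neg: "Mx d 0 < 0" using t0 by simp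
    define \<delta> where "\<delta> = - Mx d 0"
    have \<delta>: "\<delta> > 0" using neg by (simp add: \<delta>_def)
    have gd: "gradf i xs \<bullet> d \<le> - \<delta>" if "i \<in> act" for i using Mx_ge[OF that, of d 0] by (simp add: \<delta>_def)
    obtain M where "M > 0" "\<forall>y. \<exists>e k s. y = blinfun_apply L e - k + s *\<^sub>R y0 \<and> k \<in> K \<and> norm e \<le> M * norm y \<and> \<bar>s\<bar> \<le> M * norm y"
      using open_inst by blast
    then obtain e k1 s1 where e: "w - QQ = blinfun_apply L e - k1 + s1 *\<^sub>R y0" "k1 \<in> K" by blast
    define S where "S = (\<Sum>i\<in>act. \<bar>gradf i xs \<bullet> e + qq i\<bar>)"
    define lam where "lam = (1 + S) / \<delta>"
    have lam: "lam > 0" using \<delta> by (simp add: lam_def S_def add_pos_nonneg sum_nonneg)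
    have rep0: "blinfun_apply L d = k + s *\<^sub>R y0" using rep t0 by simp
    have "blinfun_apply L (e + lam *\<^sub>R d) + QQ - w = (k1 + lam *\<^sub>R k) + (lam * s - s1) *\<^sub>R y0"
      using e(1) rep0 by (simp add: blinfun.add_right blinfun.scaleR_right algebra_simps)
    moreover have "k1 + lam *\<^sub>R k \<in> K"
      using cone_add[OF K_cone K_convex e(2)] K_cone k lam unfolding cone_def by auto
    ultimately obtain i where i: "i \<in> act" "gradf i xs \<bullet> (e + lam *\<^sub>R d) + qq i \<ge> 0"
      using primal[OF w] by blast
    have "gradf i xs \<bullet> (e + lam *\<^sub>R d) + qq i = (gradf i xs \<bullet> e + qq i) + lam * (gradf i xs \<bullet> d)"
      by (simp add: inner_add_right algebra_simps)
    also have "\<dots> \<le> S + lam * (- \<delta>)"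
    proof (intro add_mono mult_left_mono)
      show "gradf i xs \<bullet> e + qq i \<le> S" unfolding S_def
        using member_le_sum[OF i(1), of "\<lambda>i. \<bar>gradf i xs \<bullet> e + qq i\<bar>"] fin_act by auto
    qed (use gd[OF i(1)] lam in auto)
    also have "\<dots> = -1" using \<delta> by (simp add: lam_def)
    finally show False using i(2) by simp
  qed
qed

end

context setting begin

lemma dual_step:
  assumes w: "w \<in> second_order_tangent_set K y0 (blinfun_apply L h)"
  shows "\<exists>\<alpha>. ((\<forall>i. \<alpha> i \<ge> 0) \<and> (\<forall>i. i \<notin> act \<longrightarrow> \<alpha> i = 0) \<and>
             (\<Sum>i\<in>{1..m}. \<alpha> i) = 1 \<and>
             (\<forall>v\<in>contingent_cone A xs.
                (\<Sum>i\<in>{1..m}. \<alpha> i *\<^sub>R gradf i xs) \<bullet> v + blinfun_apply lams (blinfun_apply L v) \<ge> 0))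
         \<and> blinfun_apply lams w \<le> (\<Sum>i\<in>{1..m}. \<alpha> i * (h \<bullet> blinfun_apply (Hf i xs) h)) + blinfun_apply lams QQ"
proof -
  obtain M where M: "M > 0" "\<And>y. \<exists>e k s. y = blinfun_apply L e - k + s *\<^sub>R y0 \<and> k \<in> K \<and> norm e \<le> M * norm y \<and> \<bar>s\<bar> \<le> M * norm y"
    using open_inst by blast
  have K0: "0 \<in> K" by (rule cone_zero_in[OF K_cone K_ne])
  define V where "V y = {Mx d t | d t k s. t \<ge> 0 \<and> k \<in> K \<and> y = blinfun_apply L d + t *\<^sub>R (QQ - w) - (k + s *\<^sub>R y0)}" for y
  have V_I: "Mx d t \<in> V y" if "t \<ge> 0" "k \<in> K" "y = blinfun_apply L d + t *\<^sub>R (QQ - w) - (k + s *\<^sub>R y0)" for y d t k s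
    unfolding V_def using that by blast
  have V_E: "\<exists>d t k s. v = Mx d t \<and> t \<ge> 0 \<and> k \<in> K \<and> y = blinfun_apply L d + t *\<^sub>R (QQ - w) - (k + s *\<^sub>R y0)"
    if "v \<in> V y" for v y using that unfolding V_def by blast
  have V_bnd: "\<exists>v\<in>V y. v \<le> Gn * M * norm y" for y
  proof -
    obtain e k s where e: "y = blinfun_apply L e - k + s *\<^sub>R y0" "k \<in> K" "norm e \<le> M * norm y" using M(2) by blast
    have "Mx e 0 \<in> V y" by (rule V_I[of 0 k y e "- s"]) (use e in auto)
    moreover have "Mx e 0 \<le> Gn * M * norm y"
      using Mx_bound[of e] mult_left_mono[OF e(3) Gn_nonneg] by (simp add: mult.assoc)
    ultimately show ?thesis by blast
  qed
  have V_ne: "V y \<noteq> {}" for y using V_bnd by blast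
  have V_sum: "\<exists>v\<in>V (y1 + y2). v \<le> v1 + v2" if vv: "v1 \<in> V y1" "v2 \<in> V y2" for v1 v2 y1 y2
  proof -
    obtain d1 t1 k1 s1 where 1: "v1 = Mx d1 t1" "t1 \<ge> 0" "k1 \<in> K" "y1 = blinfun_apply L d1 + t1 *\<^sub>R (QQ - w) - (k1 + s1 *\<^sub>R y0)"
      using V_E[OF vv(1)] by blast
    obtain d2 t2 k2 s2 where 2: "v2 = Mx d2 t2" "t2 \<ge> 0" "k2 \<in> K" "y2 = blinfun_apply L d2 + t2 *\<^sub>R (QQ - w) - (k2 + s2 *\<^sub>R y0)"
      using V_E[OF vv(2)] by blast
    have "Mx (d1 + d2) (t1 + t2) \<in> V (y1 + y2)"
    proof (rule V_I[where k="k1 + k2" and s="s1 + s2"])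
      show "0 \<le> t1 + t2" using 1 2 by simp
      show "k1 + k2 \<in> K" using cone_add[OF K_cone K_convex 1(3) 2(3)] .
      show "y1 + y2 = blinfun_apply L (d1 + d2) + (t1 + t2) *\<^sub>R (QQ - w) - (k1 + k2 + (s1 + s2) *\<^sub>R y0)"
        unfolding 1(4) 2(4) by (simp add: blinfun.add_right algebra_simps)
    qed
    thus ?thesis using Mx_sub[of d1 d2 t1 t2] 1(1) 2(1) by blast
  qed
  have V_lb: "0 \<le> v + v'" if vv: "v \<in> V y" "v' \<in> V (- y)" for v v' y
  proof -
    obtain v0 where v0: "v0 \<in> V (y + - y)" "v0 \<le> v + v'" using V_sum[OF vv] by blast
    obtain d t k s where d: "v0 = Mx d t" "t \<ge> 0" "k \<in> K" "0 = blinfun_apply L d + t *\<^sub>R (QQ - w) - (k + s *\<^sub>R y0)"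
      using V_E[OF v0(1)] by auto
    have "Mx d t \<ge> 0" by (rule pzero[OF w d(2) d(3), of d s]) (use d(4) in \<open>simp add: algebra_simps\<close>)
    thus ?thesis using v0(2) d(1) by simp
  qed
  have V_bdd: "bdd_below (V y)" for y
  proof -
    obtain v' where v': "v' \<in> V (- y)" using V_ne by blast
    show ?thesis unfolding bdd_below_def using V_lb[OF _ v'] by (intro exI[of _ "- v'"]) force
  qed
  define p where "p y = Inf (V y)" for y
  have p_le: "p y \<le> v" if "v \<in> V y" for v y unfolding p_def using that V_bdd by (rule cInf_lower)
  have p_sub: "p (y1 + y2) \<le> p y1 + p y2" for y1 y2
  proof -
    have "p (y1 + y2) - v2 \<le> p y1" if v2: "v2 \<in> V y2" for v2
    proof -
      have "p (y1 + y2) - v2 \<le> v1" if v1: "v1 \<in> V y1" for v1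
      proof -
        obtain v where "v \<in> V (y1 + y2)" "v \<le> v1 + v2" using V_sum[OF v1 v2] by blast
        thus ?thesis using p_le by fastforce
      qed
      thus ?thesis unfolding p_def[of y1] using V_ne by (intro cInf_greatest) auto
    qed
    hence "p (y1 + y2) - p y1 \<le> v2" if "v2 \<in> V y2" for v2 using that by fastforce
    hence "p (y1 + y2) - p y1 \<le> p y2" unfolding p_def[of y2] using V_ne by (intro cInf_greatest) auto
    thus ?thesis by simp
  qed
  have V_scale: "c * v \<in> V (c *\<^sub>R y)" if cv: "c > 0" "v \<in> V y" for c v y
  proof -
    obtain d t k s where d: "v = Mx d t" "t \<ge> 0" "k \<in> K" "y = blinfun_apply L d + t *\<^sub>R (QQ - w) - (k + s *\<^sub>R y0)"
      using V_E[OF cv(2)] by blast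
    have "Mx (c *\<^sub>R d) (c * t) \<in> V (c *\<^sub>R y)"
    proof (rule V_I[where k="c *\<^sub>R k" and s="c * s"])
      show "0 \<le> c * t" using cv d by simp
      show "c *\<^sub>R k \<in> K" using K_cone d(3) cv(1) unfolding cone_def by auto
      show "c *\<^sub>R y = blinfun_apply L (c *\<^sub>R d) + (c * t) *\<^sub>R (QQ - w) - (c *\<^sub>R k + (c * s) *\<^sub>R y0)"
        unfolding d(4) by (simp add: blinfun.scaleR_right algebra_simps)
    qed
    thus ?thesis using Mx_scale[OF cv(1)] d(1) by simp
  qed
  have p_hom: "p (c *\<^sub>R y) = c * p y" if c: "c > 0" for c y
  proof (rule antisym)
    have "p (c *\<^sub>R y) / c \<le> v" if vV: "v \<in> V y" for v
    proof -
      have "p (c *\<^sub>R y) \<le> c * v" using p_le V_scale[OF c vV] by blast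
      thus ?thesis using c by (simp add: pos_divide_le_eq mult.commute)
    qed
    hence "p (c *\<^sub>R y) / c \<le> p y" unfolding p_def[of y] using V_ne by (intro cInf_greatest) auto
    thus "p (c *\<^sub>R y) \<le> c * p y" using c by (simp add: divide_le_eq mult.commute)
  next
    have "c * p y \<le> v" if "v \<in> V (c *\<^sub>R y)" for v
    proof -
      have "(1/c) * v \<in> V ((1/c) *\<^sub>R (c *\<^sub>R y))" using c by (intro V_scale that) simp
      hence "(1/c) * v \<in> V y" using c by simp
      hence "p y \<le> (1/c) * v" by (rule p_le)
      thus ?thesis using c by (simp add: field_simps)
    qed
    thus "c * p y \<le> p (c *\<^sub>R y)" unfolding p_def[of "c *\<^sub>R y"] using V_ne by (intro cInf_greatest) auto
  qed
  obtain \<mu> where \<mu>: "linear \<mu>" "\<And>y. \<mu> y \<le> p y"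
    using hahn_banach_sublinear[of p, OF p_sub p_hom] by blast
  interpret \<mu>: linear \<mu> by (rule \<mu>(1))
  have mu_rep: "\<mu> (blinfun_apply L d + t *\<^sub>R (QQ - w)) \<le> Mx d t" if "t \<ge> 0" for d t
  proof -
    have "Mx d t \<in> V (blinfun_apply L d + t *\<^sub>R (QQ - w))" by (rule V_I[of t 0 _ d 0]) (use that K0 in auto)
    thus ?thesis using \<mu>(2) p_le order_trans by blast
  qed
  have mu_C: "\<mu> (k + s *\<^sub>R y0) \<ge> 0" if "k \<in> K" for k s
  proof -
    have "Mx 0 0 \<in> V (- (k + s *\<^sub>R y0))" by (rule V_I[of 0 k _ 0 s]) (use that in auto)
    hence "\<mu> (- (k + s *\<^sub>R y0)) \<le> 0" using \<mu>(2) p_le Mx_00 by (metis order_trans)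
    thus ?thesis using \<mu>.neg[of "k + s *\<^sub>R y0"] by linarith
  qed
  have mu_y0: "\<mu> y0 = 0"
  proof -
    have "\<mu> (0 + 1 *\<^sub>R y0) \<ge> 0" "\<mu> (0 + (-1) *\<^sub>R y0) \<ge> 0" using mu_C K0 by blast+
    thus ?thesis by (simp add: \<mu>.neg)
  qed
  have mu_K: "\<mu> k \<ge> 0" if "k \<in> K" for k using mu_C[OF that, of 0] by simp
  have mu_bnd: "\<mu> y \<le> Gn * M * norm y" for y
  proof -
    obtain v where "v \<in> V y" "v \<le> Gn * M * norm y" using V_bnd by blast
    thus ?thesis using \<mu>(2)[of y] p_le[of v y] by linarith
  qed
  have bl: "bounded_linear (\<lambda>y. - \<mu> y)"
  proof (rule bounded_linear_intro[where K="Gn * M"])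
    show "- \<mu> (x + y) = - \<mu> x + - \<mu> y" for x y by (simp add: \<mu>.add)
    show "- \<mu> (r *\<^sub>R x) = r *\<^sub>R - \<mu> x" for r x by (simp add: \<mu>.scale)
    show "norm (- \<mu> x) \<le> norm x * (Gn * M)" for x
      using mu_bnd[of x] mu_bnd[of "- x"] by (simp add: \<mu>.neg abs_le_iff mult.commute)
  qed
  define lam where "lam = Blinfun (\<lambda>y. - \<mu> y)"
  have lam_app: "blinfun_apply lam y = - \<mu> y" for y unfolding lam_def bounded_linear_Blinfun_apply[OF bl] ..
  define u where "u = (\<Sum>b\<in>Basis. \<mu> (blinfun_apply L b) *\<^sub>R b)"
  have mu_L: "\<mu> (blinfun_apply L d) = u \<bullet> d" for d
  proof -
    have "\<mu> (blinfun_apply L d) = \<mu> (blinfun_apply L (\<Sum>b\<in>Basis. (d \<bullet> b) *\<^sub>R b))" by (simp add: euclidean_representation)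
    also have "\<dots> = (\<Sum>b\<in>Basis. (d \<bullet> b) * \<mu> (blinfun_apply L b))"
      by (simp add: blinfun.sum_right blinfun.scaleR_right \<mu>.sum \<mu>.scale)
    also have "\<dots> = u \<bullet> d" unfolding u_def by (simp add: inner_sum_right inner_commute mult.commute)
    finally show ?thesis .
  qed
  define \<tau> where "\<tau> = \<mu> (QQ - w)"
  have H: "u \<bullet> d + t * \<tau> \<le> Max ((\<lambda>i. gradf i xs \<bullet> d + t * qq i) ` act)" if "t \<ge> 0" for d t
    using mu_rep[OF that, of d] unfolding Mx_def \<tau>_def by (simp add: \<mu>.add \<mu>.scale mu_L)
  obtain \<alpha> where \<alpha>: "\<forall>i\<in>act. \<alpha> i \<ge> 0" "sum \<alpha> act = 1" "(\<Sum>i\<in>act. \<alpha> i *\<^sub>R gradf i xs) = u"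
      "\<tau> \<le> (\<Sum>i\<in>act. \<alpha> i * qq i)"
    using convex_comb_exists[OF fin_act act_ne H] by blast
  have lam_in: "lam \<in> {lam \<in> polar_cone K. blinfun_apply lam (G xs) = 0 \<and>
        (\<forall>v\<in>contingent_cone A xs. dir_deriv (\<lambda>x. maxfun f m x + blinfun_apply lam (G x)) xs v \<ge> 0)}"
  proof (intro CollectI conjI ballI)
    show "lam \<in> polar_cone K" unfolding polar_cone_def using mu_K lam_app by auto
    show "blinfun_apply lam (G xs) = 0" using mu_y0 lam_app by simp
    fix v
    have "u \<bullet> v = (\<Sum>i\<in>act. \<alpha> i * (gradf i xs \<bullet> v))" unfolding \<alpha>(3)[symmetric] by (simp add: inner_sum_left)
    also have "\<dots> \<le> (\<Sum>i\<in>act. \<alpha> i * Max ((\<lambda>i. gradf i xs \<bullet> v) ` act))"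
      using \<alpha>(1) fin_act by (intro sum_mono mult_left_mono) auto
    also have "\<dots> = Max ((\<lambda>i. gradf i xs \<bullet> v) ` act)" using \<alpha>(2) by (simp add: sum_distrib_right[symmetric])
    finally have "u \<bullet> v \<le> Max ((\<lambda>i. gradf i xs \<bullet> v) ` act)" .
    thus "0 \<le> dir_deriv (\<lambda>x. maxfun f m x + blinfun_apply lam (G x)) xs v"
      by (subst dir_deriv_formula) (simp add: lam_app mu_L)
  qed
  hence lam_eq: "lam = lams" using Lambda_single by blast
  define \<alpha>' where "\<alpha>' i = (if i \<in> act then \<alpha> i else 0)" for i
  have sum_tr: "(\<Sum>i\<in>{1..m}. g i) = (\<Sum>i\<in>act. g i)" if "\<And>i. i \<notin> act \<Longrightarrow> g i = 0" for g :: "nat \<Rightarrow> 'z::comm_monoid_add"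
    by (rule sum.mono_neutral_right) (use act_sub that in auto)
  have s1: "(\<Sum>i\<in>{1..m}. \<alpha>' i) = 1" using sum_tr[of \<alpha>'] \<alpha>(2) by (simp add: \<alpha>'_def)
  have s2: "(\<Sum>i\<in>{1..m}. \<alpha>' i *\<^sub>R gradf i xs) = u"
    using sum_tr[of "\<lambda>i. \<alpha>' i *\<^sub>R gradf i xs"] \<alpha>(3) by (simp add: \<alpha>'_def)
  have s3: "(\<Sum>i\<in>{1..m}. \<alpha>' i * (h \<bullet> blinfun_apply (Hf i xs) h)) = (\<Sum>i\<in>act. \<alpha> i * qq i)"
    using sum_tr[of "\<lambda>i. \<alpha>' i * (h \<bullet> blinfun_apply (Hf i xs) h)"] by (simp add: \<alpha>'_def qq_def)
  show ?thesis
  proof (intro exI[of _ \<alpha>'] conjI allI impI ballI)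
    show "0 \<le> \<alpha>' i" for i using \<alpha>(1) by (simp add: \<alpha>'_def)
    show "i \<notin> act \<Longrightarrow> \<alpha>' i = 0" for i by (simp add: \<alpha>'_def)
    show "(\<Sum>i\<in>{1..m}. \<alpha>' i) = 1" by (rule s1)
    show "0 \<le> (\<Sum>i\<in>{1..m}. \<alpha>' i *\<^sub>R gradf i xs) \<bullet> v + blinfun_apply lams (blinfun_apply L v)" for v
      unfolding s2 lam_eq[symmetric] lam_app mu_L by simp
    show "blinfun_apply lams w \<le> (\<Sum>i\<in>{1..m}. \<alpha>' i * (h \<bullet> blinfun_apply (Hf i xs) h)) + blinfun_apply lams QQ"
      unfolding s3 lam_eq[symmetric] lam_app using \<alpha>(4) unfolding \<tau>_def by (simp add: \<mu>.diff)
  qed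
qed

end

context setting begin

lemma main_result:
  "support_fun lams (second_order_tangent_set K (G xs) (blinfun_apply (DG xs) h))
      \<le> (SUP \<alpha>\<in>{\<alpha>::nat \<Rightarrow> real.
             (\<forall>i. \<alpha> i \<ge> 0) \<and> (\<forall>i. i \<notin> active_set f m xs \<longrightarrow> \<alpha> i = 0) \<and>
             (\<Sum>i\<in>{1..m}. \<alpha> i) = 1 \<and>
             (\<forall>v\<in>contingent_cone A xs.
                (\<Sum>i\<in>{1..m}. \<alpha> i *\<^sub>R gradf i xs) \<bullet> v + blinfun_apply lams (blinfun_apply (DG xs) v) \<ge> 0)}.
           ereal ((\<Sum>i\<in>{1..m}. \<alpha> i * (h \<bullet> blinfun_apply (Hf i xs) h))
                  + blinfun_apply lams (blinfun_apply (blinfun_apply (D2G xs) h) h)))"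
  unfolding support_fun_def
proof (rule SUP_least)
  fix w assume w: "w \<in> second_order_tangent_set K (G xs) (blinfun_apply (DG xs) h)"
  obtain \<alpha> where \<alpha>: "(\<forall>i. \<alpha> i \<ge> 0) \<and> (\<forall>i. i \<notin> act \<longrightarrow> \<alpha> i = 0) \<and>
             (\<Sum>i\<in>{1..m}. \<alpha> i) = 1 \<and>
             (\<forall>v\<in>contingent_cone A xs.
                (\<Sum>i\<in>{1..m}. \<alpha> i *\<^sub>R gradf i xs) \<bullet> v + blinfun_apply lams (blinfun_apply L v) \<ge> 0)"
      "blinfun_apply lams w \<le> (\<Sum>i\<in>{1..m}. \<alpha> i * (h \<bullet> blinfun_apply (Hf i xs) h)) + blinfun_apply lams QQ"
    using dual_step[OF w] by blast
  show "ereal (blinfun_apply lams w) \<le> (SUP \<alpha>\<in>{\<alpha>::nat \<Rightarrow> real.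
             (\<forall>i. \<alpha> i \<ge> 0) \<and> (\<forall>i. i \<notin> active_set f m xs \<longrightarrow> \<alpha> i = 0) \<and>
             (\<Sum>i\<in>{1..m}. \<alpha> i) = 1 \<and>
             (\<forall>v\<in>contingent_cone A xs.
                (\<Sum>i\<in>{1..m}. \<alpha> i *\<^sub>R gradf i xs) \<bullet> v + blinfun_apply lams (blinfun_apply (DG xs) v) \<ge> 0)}.
           ereal ((\<Sum>i\<in>{1..m}. \<alpha> i * (h \<bullet> blinfun_apply (Hf i xs) h))
                  + blinfun_apply lams (blinfun_apply (blinfun_apply (D2G xs) h) h)))"
    by (rule SUP_upper2[of \<alpha>]) (use \<alpha> in auto)
qed

end

theorem corollary2:
  fixes A :: "'a::euclidean_space set"
    and K :: "'b::banach set"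
    and m :: nat
    and f :: "'a \<Rightarrow> nat \<Rightarrow> real"
    and gradf :: "nat \<Rightarrow> 'a \<Rightarrow> 'a"
    and Hf :: "nat \<Rightarrow> 'a \<Rightarrow> 'a \<Rightarrow>\<^sub>L 'a"
    and G :: "'a \<Rightarrow> 'b"
    and DG :: "'a \<Rightarrow> 'a \<Rightarrow>\<^sub>L 'b"
    and D2G :: "'a \<Rightarrow> 'a \<Rightarrow>\<^sub>L 'a \<Rightarrow>\<^sub>L 'b"
    and xs :: 'a
    and lams :: "'b \<Rightarrow>\<^sub>L real"
    and h :: 'a
  assumes A_ne: "A \<noteq> {}" and A_closed: "closed A" and A_convex: "convex A"
    and K_ne: "K \<noteq> {}" and K_closed: "closed K" and K_convex: "convex K" and K_cone: "cone K"
    and m_pos: "m \<ge> 1"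
    \<comment> \<open>each f_i differentiable, with gradient gradf i\<close>
    and f_diff: "\<And>i x. i \<in> {1..m} \<Longrightarrow> ((\<lambda>y. f y i) has_derivative (\<lambda>v. gradf i x \<bullet> v)) (at x)"
    \<comment> \<open>G continuously Frechet differentiable, with derivative DG\<close>
    and G_diff: "\<And>x. (G has_derivative blinfun_apply (DG x)) (at x)"
    and DG_cont: "continuous_on UNIV DG"
    \<comment> \<open>twice continuous differentiability of G and of each f_i near xs\<close>
    and C2_near: "\<exists>r>0.
        (\<forall>x\<in>ball xs r. (DG has_derivative blinfun_apply (D2G x)) (at x)) \<and>
        continuous_on (ball xs r) D2G \<and>
        (\<forall>i\<in>{1..m}. (\<forall>x\<in>ball xs r. (gradf i has_derivative blinfun_apply (Hf i x)) (at x)) \<and>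
           continuous_on (ball xs r) (Hf i))"
    \<comment> \<open>xs is an interior locally optimal solution of (P)\<close>
    and xs_int: "xs \<in> interior A"
    and xs_feas: "G xs \<in> K"
    and xs_locmin: "\<exists>\<epsilon>>0. \<forall>x\<in>A. G x \<in> K \<longrightarrow> dist x xs < \<epsilon> \<longrightarrow> maxfun f m xs \<le> maxfun f m x"
    \<comment> \<open>Robinson's constraint qualification\<close>
    and RCQ: "0 \<in> interior {G xs + blinfun_apply (DG xs) (a - xs) - k | a k. a \<in> A \<and> k \<in> K}"
    \<comment> \<open>uniqueness of the Lagrange multiplier\<close>
    and lams_K: "lams \<in> polar_cone K"
    and Lambda_single: "{lam \<in> polar_cone K. blinfun_apply lam (G xs) = 0 \<and>
        (\<forall>v\<in>contingent_cone A xs.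
           dir_deriv (\<lambda>x. maxfun f m x + blinfun_apply lam (G x)) xs v \<ge> 0)} = {lams}"
    \<comment> \<open>h in the critical cone C(xs)\<close>
    and h_crit: "h \<in> contingent_cone A xs"
      "blinfun_apply (DG xs) h \<in> contingent_cone K (G xs)"
      "Max ((\<lambda>i. gradf i xs \<bullet> h) ` active_set f m xs) \<le> 0"
  shows "support_fun lams (second_order_tangent_set K (G xs) (blinfun_apply (DG xs) h))
      \<le> (SUP \<alpha>\<in>{\<alpha>::nat \<Rightarrow> real.
             (\<forall>i. \<alpha> i \<ge> 0) \<and> (\<forall>i. i \<notin> active_set f m xs \<longrightarrow> \<alpha> i = 0) \<and>
             (\<Sum>i\<in>{1..m}. \<alpha> i) = 1 \<and>
             (\<forall>v\<in>contingent_cone A xs.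
                (\<Sum>i\<in>{1..m}. \<alpha> i *\<^sub>R gradf i xs) \<bullet> v + blinfun_apply lams (blinfun_apply (DG xs) v) \<ge> 0)}.
           ereal ((\<Sum>i\<in>{1..m}. \<alpha> i * (h \<bullet> blinfun_apply (Hf i xs) h))
                  + blinfun_apply lams (blinfun_apply (blinfun_apply (D2G xs) h) h)))"
proof -
  interpret setting A K m f gradf Hf G DG D2G xs lams h
    by (rule setting.intro) (fact assms)+
  show ?thesis by (rule main_result)
qed

end
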